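(* Assume (C). Let $h>0$, $n\ge1$, $T=nh$ and $a>0$ deterministic. Then $$\Delta\big(\mathcal G_0^{T},\widetilde{\mathcal G}_0^{\bar A_T(Y)}\big)=0\quad\text{and}\quad\Delta\big(\mathcal G_0^{\bar\tau_a(X)},\widetilde{\mathcal G}_0^{a}\big)=0.$$
   Context: $\sigma\in C^2(\mathbb R)$ satisfies (C): $0<\sigma_0^2\le\sigma^2\le\sigma_1^2$, $|\sigma'|+|\sigma''|\le K_\sigma$; $\mathcal F_K=\{b\in C^1(\mathbb R):|b|+|b'|\le K\}$; $f=b/\sigma^2$; $t_i=ih$. The continuous Euler scheme $\bar\xi$ solves $d\bar\xi_t=\bar b_h(t,\bar\xi)dt+\bar\sigma_h(t,\bar\xi)dW_t$, $\bar\xi_0=\eta$ ($W$ Brownian motion, $\eta$ initial variable with law independent of $b$), where $\bar b_h(t,x)=\sum_{i\ge1}b(x(t_{i-1}))1_{(t_{i-1},t_i]}(t)$, $\bar\sigma_h(t,x)=\sum_{i\ge1}\sigma(x(t_{i-1}))1_{(t_{i-1},t_i]}(t)$. Path functionals: $\bar\rho_t(x)=\int_0^t\bar\sigma_h^2(s,x)ds$, $\bar\tau_u(x)=\inf\{t\ge0:\bar\rho_t(x)\ge u\}$; $\bar A_0(y)=0$, $\bar A_t(y)=\bar A_{t_{i-1}}(y)+\sigma^2(y(\bar A_{t_{i-1}}(y)))(t-t_{i-1})$ for $t\in(t_{i-1},t_i]$. Canonical space $C=C(\mathbb R^+,\mathbb R)$ with canonical process written $X$ (filtration $\mathcal C^X_t=\bigcap_{s>t}\sigma(X_r,r\le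 s)$) or $Y$ (filtration $\mathcal C^Y_u$ likewise). $Q_b$ is the law of $\bar\xi$; $\widetilde Q_b$ is the law of $\bar\zeta_u=\bar\xi_{\bar\tau_u(\bar\xi)}$. For stopping times $T,A$: $\mathcal G_0^T=(C,\mathcal C^X_T,(Q_b|_{\mathcal C^X_T})_{b\in\mathcal F_K})$, $\widetilde{\mathcal G}_0^A=(C,\mathcal C^Y_A,(\widetilde Q_b|_{\mathcal C^Y_A})_{b\in\mathcal F_K})$. Le Cam distance: $\delta(\mathcal E,\mathcal G)=\inf_M\sup_b\|MP_b-Q_b\|_{TV}$ over Markov kernels $M$ (not depending on $b$), $\Delta=\max\{\delta(\mathcal E,\mathcal G),\delta(\mathcal G,\mathcal E)\}$. *)

theory Defs
  imports "HOL-Probability.Probability"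
begin

text \<open>Paths are represented as functions real => real which are continuous on [0,oo)
  and extensional (undefined) outside [0,oo).\<close>

definition Cspace :: "(real \<Rightarrow> real) set" where
  "Cspace = {x \<in> extensional {0..}. continuous_on {0..} x}"

text \<open>Borel sigma-algebra of C generated by the coordinates (trace of the product sigma-algebra).\<close>
definition Cmeas :: "(real \<Rightarrow> real) measure" where
  "Cmeas = restrict_space (PiM {0..} (\<lambda>_. borel)) Cspace"

definition coord_gen :: "real \<Rightarrow> (real \<Rightarrow> real) measure" where
  "coord_gen s = sigma Cspace {(\<lambda>x. x r) -` B \<inter> Cspace | r B. r \<in> {0..s} \<and> B \<in> sets borel}"

definition canon_filtr :: "real \<Rightarrow> (real \<Rightarrow> real) measure" where
  "canon_filtr t = sigma Cspace (\<Inter>s\<in>{t<..}. sets (coord_gen s))"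

definition stopped_sigma :: "((real \<Rightarrow> real) \<Rightarrow> real) \<Rightarrow> (real \<Rightarrow> real) measure" where
  "stopped_sigma T = filtration.pre_sigma Cspace canon_filtr T"

fun euler_grid :: "(real \<Rightarrow> real) \<Rightarrow> (real \<Rightarrow> real) \<Rightarrow> real \<Rightarrow> real \<Rightarrow> (real \<Rightarrow> real) \<Rightarrow> nat \<Rightarrow> real" where
  "euler_grid b \<sigma> h x0 w 0 = x0"
| "euler_grid b \<sigma> h x0 w (Suc i) =
     (let y = euler_grid b \<sigma> h x0 w i
      in y + b y * h + \<sigma> y * (w (real (Suc i) * h) - w (real i * h)))"

text \<open>Continuous Euler scheme: the solution of
  d xi_t = bbar_h(t,xi) dt + sigmabar_h(t,xi) dW_t, xi_0 = x0; on (t_{i-1}, t_i] the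
  coefficients are frozen, so the stochastic integral is the elementary one.\<close>
definition euler_path :: "(real \<Rightarrow> real) \<Rightarrow> (real \<Rightarrow> real) \<Rightarrow> real \<Rightarrow> real \<Rightarrow> (real \<Rightarrow> real) \<Rightarrow> real \<Rightarrow> real" where
  "euler_path b \<sigma> h x0 w = (\<lambda>t\<in>{0..}.
     if t = 0 then x0
     else (let i = nat \<lceil>t / h\<rceil> - 1; y = euler_grid b \<sigma> h x0 w i
           in y + b y * (t - real i * h) + \<sigma> y * (w t - w (real i * h))))"

text \<open>sigmabar_h(t,x) = sum_{i>=1} sigma(x(t_{i-1})) 1_{(t_{i-1},t_i]}(t)\<close>
definition sigma_bar :: "(real \<Rightarrow> real) \<Rightarrow> real \<Rightarrow> real \<Rightarrow> (real \<Rightarrow> real) \<Rightarrow> real" where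
  "sigma_bar \<sigma> h t x = (if t \<le> 0 then 0 else \<sigma> (x (real (nat \<lceil>t / h\<rceil> - 1) * h)))"

definition rho_bar :: "(real \<Rightarrow> real) \<Rightarrow> real \<Rightarrow> real \<Rightarrow> (real \<Rightarrow> real) \<Rightarrow> real" where
  "rho_bar \<sigma> h t x = integral {0..t} (\<lambda>s. (sigma_bar \<sigma> h s x)\<^sup>2)"

definition tau_bar :: "(real \<Rightarrow> real) \<Rightarrow> real \<Rightarrow> real \<Rightarrow> (real \<Rightarrow> real) \<Rightarrow> real" where
  "tau_bar \<sigma> h u x = Inf {t. 0 \<le> t \<and> u \<le> rho_bar \<sigma> h t x}"

fun A_grid :: "(real \<Rightarrow> real) \<Rightarrow> real \<Rightarrow> (real \<Rightarrow> real) \<Rightarrow> nat \<Rightarrow> real" where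
  "A_grid \<sigma> h y 0 = 0"
| "A_grid \<sigma> h y (Suc i) = A_grid \<sigma> h y i + (\<sigma> (y (A_grid \<sigma> h y i)))\<^sup>2 * h"

text \<open>Abar_0(y) = 0, Abar_t(y) = Abar_{t_{i-1}}(y) + sigma^2(y(Abar_{t_{i-1}}(y)))(t - t_{i-1}) on (t_{i-1},t_i]\<close>
definition A_bar :: "(real \<Rightarrow> real) \<Rightarrow> real \<Rightarrow> real \<Rightarrow> (real \<Rightarrow> real) \<Rightarrow> real" where
  "A_bar \<sigma> h t y = (if t \<le> 0 then 0 else
     (let i = nat \<lceil>t / h\<rceil> - 1; a = A_grid \<sigma> h y i
      in a + (\<sigma> (y a))\<^sup>2 * (t - real i * h)))"

definition time_change :: "(real \<Rightarrow> real) \<Rightarrow> real \<Rightarrow> (real \<Rightarrow> real) \<Rightarrow> real \<Rightarrow> real" where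
  "time_change \<sigma> h x = (\<lambda>u\<in>{0..}. x (tau_bar \<sigma> h u x))"

definition brownian_motion :: "'w measure \<Rightarrow> (real \<Rightarrow> 'w \<Rightarrow> real) \<Rightarrow> bool" where
  "brownian_motion M W \<longleftrightarrow> prob_space M \<and>
     (\<forall>\<omega>\<in>space M. W 0 \<omega> = 0 \<and> continuous_on {0..} (\<lambda>t. W t \<omega>)) \<and>
     (\<forall>s t. 0 \<le> s \<and> s < t \<longrightarrow>
        distributed M lborel (\<lambda>\<omega>. W t \<omega> - W s \<omega>) (normal_density 0 (sqrt (t - s)))) \<and>
     (\<forall>(ts :: nat \<Rightarrow> real) k. 0 \<le> ts 0 \<and> (\<forall>j. ts j < ts (Suc j)) \<longrightarrow>
        prob_space.indep_vars M (\<lambda>_. borel) (\<lambda>j \<omega>. W (ts (Suc j)) \<omega> - W (ts j) \<omega>) {..<k})"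

definition Q_law :: "'w measure \<Rightarrow> (real \<Rightarrow> 'w \<Rightarrow> real) \<Rightarrow> ('w \<Rightarrow> real) \<Rightarrow> (real \<Rightarrow> real) \<Rightarrow> real
    \<Rightarrow> (real \<Rightarrow> real) \<Rightarrow> (real \<Rightarrow> real) measure" where
  "Q_law M W \<eta> \<sigma> h b = distr M Cmeas (\<lambda>\<omega>. euler_path b \<sigma> h (\<eta> \<omega>) (\<lambda>t. W t \<omega>))"

definition Qt_law :: "'w measure \<Rightarrow> (real \<Rightarrow> 'w \<Rightarrow> real) \<Rightarrow> ('w \<Rightarrow> real) \<Rightarrow> (real \<Rightarrow> real) \<Rightarrow> real
    \<Rightarrow> (real \<Rightarrow> real) \<Rightarrow> (real \<Rightarrow> real) measure" where
  "Qt_law M W \<eta> \<sigma> h b = distr M Cmeas (\<lambda>\<omega>. time_change \<sigma> h (euler_path b \<sigma> h (\<eta> \<omega>) (\<lambda>t. W t \<omega>)))"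

definition FK :: "real \<Rightarrow> (real \<Rightarrow> real) set" where
  "FK K = {b. (\<forall>x. b differentiable at x) \<and> continuous_on UNIV (deriv b) \<and>
              (\<forall>x. \<bar>b x\<bar> + \<bar>deriv b x\<bar> \<le> K)}"

definition tv_dist :: "'a measure \<Rightarrow> 'a measure \<Rightarrow> real" where
  "tv_dist P Q = (SUP A\<in>sets P. \<bar>measure P A - measure Q A\<bar>)"

text \<open>Deficiency delta(E,G) of the experiment (E, P_theta) w.r.t. (G, Q_theta), theta in Theta:
  infimum over Markov kernels K from E to G of sup_theta ||K P_theta - Q_theta||_TV
  (the supremum over the empty parameter set is taken to be 0).\<close>
definition deficiency :: "'a measure \<Rightarrow> ('p \<Rightarrow> 'a measure) \<Rightarrow> 'b measure \<Rightarrow> ('p \<Rightarrow> 'b measure)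
    \<Rightarrow> 'p set \<Rightarrow> real" where
  "deficiency E P G Q \<Theta> =
     (INF K\<in>measurable E (prob_algebra G). Sup (insert 0 ((\<lambda>\<theta>. tv_dist (bind (P \<theta>) K) (Q \<theta>)) ` \<Theta>)))"

definition le_cam_dist :: "'a measure \<Rightarrow> ('p \<Rightarrow> 'a measure) \<Rightarrow> 'b measure \<Rightarrow> ('p \<Rightarrow> 'b measure)
    \<Rightarrow> 'p set \<Rightarrow> real" where
  "le_cam_dist E P G Q \<Theta> = max (deficiency E P G Q \<Theta>) (deficiency G Q E P \<Theta>)"

end

theory Submission
  imports Defs
begin

locale tc =
  fixes \<sigma> :: "real \<Rightarrow> real" and h s0 s1 :: real
  assumes h: "h > 0" and s0: "s0 > 0" and sb: "\<And>v. s0 \<le> (\<sigma> v)\<^sup>2 \<and> (\<sigma> v)\<^sup>2 \<le> s1"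
    and cont: "continuous_on UNIV \<sigma>"
begin

definition Rg :: "(real \<Rightarrow> real) \<Rightarrow> nat \<Rightarrow> real" where
  "Rg x k = (\<Sum>j<k. (\<sigma> (x (real j * h)))\<^sup>2 * h)"

lemma idx_ceil:
  assumes "real k * h < s" "s \<le> real (Suc k) * h"
  shows "nat \<lceil>s / h\<rceil> - 1 = k"
proof -
  have "real k < s / h" "s / h \<le> real (Suc k)" using assms h by (auto simp: field_simps)
  then have "\<lceil>s / h\<rceil> = int (Suc k)" by (subst ceiling_eq_iff) auto
  then show ?thesis by simp
qed

lemma sigma_bar_piece:
  assumes "real k * h < s" "s \<le> real (Suc k) * h"
  shows "sigma_bar \<sigma> h s x = \<sigma> (x (real k * h))"
proof -
  have "0 \<le> real k * h" using h by simp
  then have "s > 0" using assms by linarith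
  then show ?thesis using idx_ceil[OF assms] by (simp add: sigma_bar_def)
qed

lemma piece_integral:
  assumes "real k * h \<le> t" "t \<le> real (Suc k) * h"
  shows "((\<lambda>s. (sigma_bar \<sigma> h s x)\<^sup>2) has_integral ((\<sigma> (x (real k * h)))\<^sup>2 * (t - real k * h))) {real k * h..t}"
proof -
  have "((\<lambda>s. (\<sigma> (x (real k * h)))\<^sup>2) has_integral ((\<sigma> (x (real k * h)))\<^sup>2 * (t - real k * h))) {real k * h..t}"
    using has_integral_const_real[of "(\<sigma> (x (real k * h)))\<^sup>2" "real k * h" t] assms by (simp add: mult.commute)
  note I = this
  have E: "(sigma_bar \<sigma> h s x)\<^sup>2 = (\<sigma> (x (real k * h)))\<^sup>2" if "s \<in> {real k * h..t} - {real k * h}" for s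
  proof -
    have "real k * h < s" "s \<le> real (Suc k) * h" using that assms by auto
    then show ?thesis using sigma_bar_piece by simp
  qed
  show ?thesis
    by (rule has_integral_spike_finite[where S="{real k * h}", OF _ E I]) auto
qed

lemma rho_has_integral:
  assumes "real k * h \<le> t" "t \<le> real (Suc k) * h"
  shows "((\<lambda>s. (sigma_bar \<sigma> h s x)\<^sup>2) has_integral (Rg x k + (\<sigma> (x (real k * h)))\<^sup>2 * (t - real k * h))) {0..t}"
  using assms
proof (induction k arbitrary: t)
  case 0
  then show ?case using piece_integral[of 0 t x] by (simp add: Rg_def)
next
  case (Suc k)
  have a: "((\<lambda>s. (sigma_bar \<sigma> h s x)\<^sup>2) has_integral (Rg x k + (\<sigma> (x (real k * h)))\<^sup>2 * (real (Suc k) * h - real k * h))) {0..real (Suc k) * h}"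
    using Suc.IH[of "real (Suc k) * h"] h by (simp add: field_simps)
  have b: "((\<lambda>s. (sigma_bar \<sigma> h s x)\<^sup>2) has_integral ((\<sigma> (x (real (Suc k) * h)))\<^sup>2 * (t - real (Suc k) * h))) {real (Suc k) * h..t}"
    using piece_integral Suc.prems by blast
  have "0 \<le> real (Suc k) * h" using h by simp
  from has_integral_combine[OF this Suc.prems(1) a b]
  show ?case by (simp add: Rg_def field_simps)
qed

lemma rho_formula:
  assumes "real k * h \<le> t" "t \<le> real (Suc k) * h"
  shows "rho_bar \<sigma> h t x = Rg x k + (\<sigma> (x (real k * h)))\<^sup>2 * (t - real k * h)"
  unfolding rho_bar_def using rho_has_integral[OF assms] by (rule integral_unique)

lemma rho_integrable: "t \<ge> 0 \<Longrightarrow> (\<lambda>s. (sigma_bar \<sigma> h s x)\<^sup>2) integrable_on {0..t}"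
proof -
  assume t: "t \<ge> 0"
  define k where "k = nat \<lfloor>t / h\<rfloor>"
  have "real k = of_int \<lfloor>t / h\<rfloor>" using t h unfolding k_def by simp
  moreover have "of_int \<lfloor>t / h\<rfloor> \<le> t / h" "t / h < of_int \<lfloor>t / h\<rfloor> + 1" by linarith+
  ultimately have "real k \<le> t / h" "t / h \<le> real k + 1" by linarith+
  then have "real k * h \<le> t" "t \<le> real (Suc k) * h" using h by (auto simp: field_simps)
  then show ?thesis using rho_has_integral by blast
qed


abbreviation "fsq x u \<equiv> (sigma_bar \<sigma> h u x)\<^sup>2"

lemma s1_pos: "s1 > 0" using sb[of 0] s0 by linarith

lemma f_bounds: "0 \<le> fsq x u" "fsq x u \<le> s1" "u > 0 \<Longrightarrow> s0 \<le> fsq x u"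
  using sb s1_pos by (auto simp: sigma_bar_def)

lemma rho_bounds:
  assumes "0 \<le> s" "s \<le> t"
  shows "s0 * (t - s) \<le> rho_bar \<sigma> h t x - rho_bar \<sigma> h s x \<and> rho_bar \<sigma> h t x - rho_bar \<sigma> h s x \<le> s1 * (t - s)"
proof -
  have it: "fsq x integrable_on {0..t}" using rho_integrable assms by simp
  have comb: "integral {0..s} (fsq x) + integral {s..t} (fsq x) = integral {0..t} (fsq x)"
    by (rule Henstock_Kurzweil_Integration.integral_combine[OF assms it])
  have ist: "fsq x integrable_on {s..t}" using integrable_subinterval_real[OF it] assms by auto
  have D: "rho_bar \<sigma> h t x - rho_bar \<sigma> h s x = integral {s..t} (fsq x)"
    using comb unfolding rho_bar_def by simp
  have up: "integral {s..t} (fsq x) \<le> integral {s..t} (\<lambda>_. s1)"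
    by (rule integral_le[OF ist]) (auto simp: f_bounds)
  define g where "g u = max s0 (fsq x u)" for u
  have geq: "g u = fsq x u" if "u \<in> {s..t} - {0}" for u
    using that f_bounds(3)[of u x] assms unfolding g_def by auto
  have ig: "g integrable_on {s..t}" by (rule integrable_spike[OF ist negligible_sing geq])
  have eqi: "integral {s..t} (fsq x) = integral {s..t} g"
    by (rule integral_spike[OF negligible_sing geq])
  have lo: "integral {s..t} (\<lambda>_. s0) \<le> integral {s..t} g"
    by (rule integral_le[OF _ ig]) (auto simp: g_def)
  show ?thesis using up lo eqi D assms by (simp add: mult.commute)
qed

lemma rho0: "rho_bar \<sigma> h 0 x = 0"
  unfolding rho_bar_def by simp

lemma rho_strict: "0 \<le> s \<Longrightarrow> s < t \<Longrightarrow> rho_bar \<sigma> h s x < rho_bar \<sigma> h t x"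
  using rho_bounds[of s t x] s0 by (smt (verit) mult_pos_pos)

lemma rho_mono: "0 \<le> s \<Longrightarrow> s \<le> t \<Longrightarrow> rho_bar \<sigma> h s x \<le> rho_bar \<sigma> h t x"
  using rho_strict[of s t x] by (cases "s = t") auto

lemma rho_nonneg: "0 \<le> t \<Longrightarrow> 0 \<le> rho_bar \<sigma> h t x"
  using rho_mono[of 0 t x] by (simp add: rho0)

lemma rho_lower: "0 \<le> t \<Longrightarrow> s0 * t \<le> rho_bar \<sigma> h t x"
  using rho_bounds[of 0 t x] by (simp add: rho0)

lemma rho_lip: "0 \<le> s \<Longrightarrow> 0 \<le> t \<Longrightarrow> \<bar>rho_bar \<sigma> h t x - rho_bar \<sigma> h s x\<bar> \<le> s1 * \<bar>t - s\<bar>"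
proof -
  assume a: "0 \<le> s" "0 \<le> t"
  show ?thesis
  proof (cases "s \<le> t")
    case True
    then have "0 \<le> s0 * (t - s)" using s0 by simp
    then show ?thesis using rho_bounds[of s t x] a True by (auto simp: abs_if)
  next
    case False
    then have "0 \<le> s0 * (s - t)" using s0 by simp
    then show ?thesis using rho_bounds[of t s x] a False by (auto simp: abs_if)
  qed
qed

lemma lip_cont:
  fixes f :: "real \<Rightarrow> real"
  assumes L: "L > 0" and lip: "\<And>s t. s \<in> S \<Longrightarrow> t \<in> S \<Longrightarrow> \<bar>f t - f s\<bar> \<le> L * \<bar>t - s\<bar>"
  shows "continuous_on S f"
  unfolding continuous_on_iff
proof (intro ballI allI impI)
  fix x e assume x: "x \<in> S" and e: "(0::real) < e"
  show "\<exists>d>0. \<forall>x'\<in>S. dist x' x < d \<longrightarrow> dist (f x') (f x) < e"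
  proof (intro exI[of _ "e / L"] conjI ballI impI)
    show "e / L > 0" using e L by simp
    fix x' assume "x' \<in> S" "dist x' x < e / L"
    then have "\<bar>f x' - f x\<bar> \<le> L * \<bar>x' - x\<bar>" "\<bar>x' - x\<bar> < e / L" using lip x by (auto simp: dist_real_def)
    then have "\<bar>f x' - f x\<bar> < L * (e / L)" using L by (smt (verit) mult_strict_left_mono)
    then show "dist (f x') (f x) < e" using L by (simp add: dist_real_def)
  qed
qed

lemma rho_cont: "continuous_on {0..} (\<lambda>t. rho_bar \<sigma> h t x)"
  by (rule lip_cont[OF s1_pos]) (auto intro: rho_lip)

lemma tau_char:
  assumes u: "u \<ge> 0"
  shows "\<exists>t0. 0 \<le> t0 \<and> rho_bar \<sigma> h t0 x = u \<and> tau_bar \<sigma> h u x = t0 \<and> (\<forall>t\<ge>0. t0 \<le> t \<longleftrightarrow> u \<le> rho_bar \<sigma> h t x)"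
proof -
  have "rho_bar \<sigma> h 0 x \<le> u" using u by (simp add: rho0)
  moreover have "u \<le> rho_bar \<sigma> h (u / s0) x" using rho_lower[of "u/s0" x] u s0 by simp
  moreover have "continuous_on {0..u/s0} (\<lambda>t. rho_bar \<sigma> h t x)"
    using rho_cont by (rule continuous_on_subset) auto
  ultimately obtain t0 where t0: "0 \<le> t0" "t0 \<le> u / s0" "rho_bar \<sigma> h t0 x = u"
    using IVT'[of "\<lambda>t. rho_bar \<sigma> h t x" 0 u "u/s0"] u s0 by auto
  have iff: "t0 \<le> t \<longleftrightarrow> u \<le> rho_bar \<sigma> h t x" if "t \<ge> 0" for t
  proof
    assume "t0 \<le> t" then show "u \<le> rho_bar \<sigma> h t x" using rho_mono[of t0 t x] t0 by simp
  next
    assume a: "u \<le> rho_bar \<sigma> h t x"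
    show "t0 \<le> t"
    proof (rule ccontr)
      assume "\<not> t0 \<le> t"
      then have "rho_bar \<sigma> h t x < rho_bar \<sigma> h t0 x" using rho_strict[of t t0 x] that by simp
      then show False using a t0 by simp
    qed
  qed
  have "{t. 0 \<le> t \<and> u \<le> rho_bar \<sigma> h t x} = {t0..}"
  proof (rule set_eqI)
    fix t show "t \<in> {t. 0 \<le> t \<and> u \<le> rho_bar \<sigma> h t x} \<longleftrightarrow> t \<in> {t0..}"
      using iff[of t] t0(1) by auto
  qed
  then have "tau_bar \<sigma> h u x = t0" unfolding tau_bar_def by simp
  then show ?thesis using t0 iff by blast
qed

lemma tau_le_iff: "0 \<le> u \<Longrightarrow> 0 \<le> t \<Longrightarrow> tau_bar \<sigma> h u x \<le> t \<longleftrightarrow> u \<le> rho_bar \<sigma> h t x"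
  using tau_char by metis

lemma tau_nonneg: "0 \<le> u \<Longrightarrow> 0 \<le> tau_bar \<sigma> h u x"
  using tau_char by metis

lemma rho_tau: "0 \<le> u \<Longrightarrow> rho_bar \<sigma> h (tau_bar \<sigma> h u x) x = u"
  using tau_char by metis

lemma tau_rho:
  assumes t: "0 \<le> t" shows "tau_bar \<sigma> h (rho_bar \<sigma> h t x) x = t"
proof -
  obtain t0 where t0: "0 \<le> t0" "rho_bar \<sigma> h t0 x = rho_bar \<sigma> h t x" "tau_bar \<sigma> h (rho_bar \<sigma> h t x) x = t0"
    "\<forall>t'\<ge>0. t0 \<le> t' \<longleftrightarrow> rho_bar \<sigma> h t x \<le> rho_bar \<sigma> h t' x"
    using tau_char[of "rho_bar \<sigma> h t x" x] rho_nonneg[OF t, of x] by blast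
  have "t0 \<le> t" using t0(4) t by simp
  moreover have "\<not> t0 < t" by (metis t0(1) t0(2) rho_strict less_irrefl)
  ultimately show ?thesis using t0 by simp
qed

lemma tau_bounds:
  assumes "0 \<le> u" "u \<le> v"
  shows "(v - u) / s1 \<le> tau_bar \<sigma> h v x - tau_bar \<sigma> h u x \<and> tau_bar \<sigma> h v x - tau_bar \<sigma> h u x \<le> (v - u) / s0"
proof -
  let ?a = "tau_bar \<sigma> h u x" and ?b = "tau_bar \<sigma> h v x"
  have a0: "0 \<le> ?a" using tau_nonneg assms by simp
  have ab: "?a \<le> ?b" using tau_le_iff[of u ?b x] rho_tau[of v x] assms tau_nonneg[of v x] by simp
  have "s0 * (?b - ?a) \<le> v - u \<and> v - u \<le> s1 * (?b - ?a)"
    using rho_bounds[OF a0 ab, of x] rho_tau[of u x] rho_tau[of v x] assms by simp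
  then show ?thesis using s0 s1_pos by (simp add: field_simps)
qed

lemma tau_cont: "continuous_on {0..} (\<lambda>u. tau_bar \<sigma> h u x)"
proof (rule lip_cont[of "1/s0"])
  show "1/s0 > 0" using s0 by simp
  fix s t :: real assume "s \<in> {0..}" "t \<in> {0..}"
  then show "\<bar>tau_bar \<sigma> h t x - tau_bar \<sigma> h s x\<bar> \<le> 1 / s0 * \<bar>t - s\<bar>"
  proof (cases "s \<le> t")
    case True
    have "0 \<le> (t - s) / s1" using True s1_pos by simp
    moreover have d: "(t - s) / s1 \<le> tau_bar \<sigma> h t x - tau_bar \<sigma> h s x" "tau_bar \<sigma> h t x - tau_bar \<sigma> h s x \<le> (t - s) / s0"
      using tau_bounds[of s t x] True \<open>s \<in> _\<close> by auto
    ultimately have "\<bar>tau_bar \<sigma> h t x - tau_bar \<sigma> h s x\<bar> = tau_bar \<sigma> h t x - tau_bar \<sigma> h s x" by simp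
    then show ?thesis using d True by simp
  next
    case False
    have "0 \<le> (s - t) / s1" using False s1_pos by simp
    moreover have d: "(s - t) / s1 \<le> tau_bar \<sigma> h s x - tau_bar \<sigma> h t x" "tau_bar \<sigma> h s x - tau_bar \<sigma> h t x \<le> (s - t) / s0"
      using tau_bounds[of t s x] False \<open>t \<in> _\<close> by auto
    ultimately have "\<bar>tau_bar \<sigma> h t x - tau_bar \<sigma> h s x\<bar> = tau_bar \<sigma> h s x - tau_bar \<sigma> h t x" by simp
    then show ?thesis using d False by simp
  qed
qed

end

context tc begin

lemma floor_idx:
  assumes t: "t \<ge> 0"
  shows "real (nat \<lfloor>t / h\<rfloor>) * h \<le> t \<and> t \<le> real (Suc (nat \<lfloor>t / h\<rfloor>)) * h"
proof -
  define k where "k = nat \<lfloor>t / h\<rfloor>"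
  have "real k = of_int \<lfloor>t / h\<rfloor>" using t h unfolding k_def by simp
  moreover have "of_int \<lfloor>t / h\<rfloor> \<le> t / h" "t / h < of_int \<lfloor>t / h\<rfloor> + 1" by linarith+
  ultimately have "real k \<le> t / h" "t / h \<le> real k + 1" by linarith+
  then have "real k * h \<le> t" "t \<le> real (Suc k) * h" using h by (auto simp: field_simps)
  then show ?thesis unfolding k_def by simp
qed

lemma A_grid_pt: "A_bar \<sigma> h (real i * h) y = A_grid \<sigma> h y i"
proof (cases i)
  case 0 then show ?thesis by (simp add: A_bar_def)
next
  case (Suc j)
  have "real i * h / h = real i" using h by simp
  then have "\<lceil>real i * h / h\<rceil> = int i" by simp
  then have "nat \<lceil>real i * h / h\<rceil> - 1 = j" using Suc by simp
  moreover have "real i > 0" using Suc by simp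
  then have "\<not> real i * h \<le> 0" using h by (simp add: not_le mult_pos_pos del: of_nat_Suc)
  ultimately show ?thesis using Suc by (simp add: A_bar_def Let_def algebra_simps)
qed

lemma A_formula:
  assumes "real k * h \<le> t" "t \<le> real (Suc k) * h"
  shows "A_bar \<sigma> h t y = A_grid \<sigma> h y k + (\<sigma> (y (A_grid \<sigma> h y k)))\<^sup>2 * (t - real k * h)"
proof (cases "t = real k * h")
  case True then show ?thesis using A_grid_pt by simp
next
  case False
  then have lt: "real k * h < t" using assms by simp
  have "0 \<le> real k * h" using h by simp
  then have "\<not> t \<le> 0" using lt by linarith
  then show ?thesis using idx_ceil[OF lt assms(2)] by (simp add: A_bar_def Let_def)
qed

definition psi :: "(real \<Rightarrow> real) \<Rightarrow> (real \<Rightarrow> real)" where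
  "psi y = (\<lambda>t\<in>{0..}. y (A_bar \<sigma> h t y))"

abbreviation "phi \<equiv> time_change \<sigma> h"

lemma phi_apply: "0 \<le> u \<Longrightarrow> phi x u = x (tau_bar \<sigma> h u x)"
  by (simp add: time_change_def)

lemma psi_apply: "0 \<le> t \<Longrightarrow> psi y t = y (A_bar \<sigma> h t y)"
  by (simp add: psi_def)

lemma A_nonneg_grid: "0 \<le> A_grid \<sigma> h y k"
  by (induction k) (use h in auto)

lemma Rg_psi: "Rg (psi y) k = A_grid \<sigma> h y k"
proof (induction k)
  case 0 then show ?case by (simp add: Rg_def)
next
  case (Suc k)
  have "psi y (real k * h) = y (A_grid \<sigma> h y k)"
    using h by (simp add: psi_def A_grid_pt)
  then show ?case using Suc by (simp add: Rg_def)
qed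

lemma rho_psi: "0 \<le> t \<Longrightarrow> rho_bar \<sigma> h t (psi y) = A_bar \<sigma> h t y"
proof -
  assume t: "0 \<le> t"
  define k where "k = nat \<lfloor>t / h\<rfloor>"
  have kk: "real k * h \<le> t" "t \<le> real (Suc k) * h" using floor_idx[OF t] unfolding k_def by auto
  have "psi y (real k * h) = y (A_grid \<sigma> h y k)"
    using h by (simp add: psi_def A_grid_pt)
  then show ?thesis using rho_formula[OF kk] A_formula[OF kk] Rg_psi by simp
qed

lemma Rg_rho: "Rg x k = rho_bar \<sigma> h (real k * h) x"
  using rho_formula[of k "real k * h" x] h by simp

lemma A_grid_phi: "A_grid \<sigma> h (phi x) k = Rg x k"
proof (induction k)
  case 0 then show ?case by (simp add: Rg_def)
next
  case (Suc k)
  have r: "0 \<le> rho_bar \<sigma> h (real k * h) x" using rho_nonneg h by simp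
  have "phi x (A_grid \<sigma> h (phi x) k) = x (real k * h)"
    using Suc r h by (simp add: phi_apply Rg_rho tau_rho)
  then show ?case using Suc by (simp add: Rg_def)
qed

lemma A_phi: "0 \<le> t \<Longrightarrow> A_bar \<sigma> h t (phi x) = rho_bar \<sigma> h t x"
proof -
  assume t: "0 \<le> t"
  define k where "k = nat \<lfloor>t / h\<rfloor>"
  have kk: "real k * h \<le> t" "t \<le> real (Suc k) * h" using floor_idx[OF t] unfolding k_def by auto
  have r: "0 \<le> rho_bar \<sigma> h (real k * h) x" using rho_nonneg h by simp
  have "phi x (A_grid \<sigma> h (phi x) k) = x (real k * h)"
    using r h by (simp add: phi_apply Rg_rho tau_rho A_grid_phi)
  then show ?thesis using rho_formula[OF kk] A_formula[OF kk] A_grid_phi by simp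
qed

lemma A_nonneg: "0 \<le> t \<Longrightarrow> 0 \<le> A_bar \<sigma> h t y"
  using rho_psi rho_nonneg by metis

lemma A_bounds: "0 \<le> s \<Longrightarrow> s \<le> t \<Longrightarrow>
   s0 * (t - s) \<le> A_bar \<sigma> h t y - A_bar \<sigma> h s y \<and> A_bar \<sigma> h t y - A_bar \<sigma> h s y \<le> s1 * (t - s)"
  using rho_bounds[of s t "psi y"] rho_psi[of s y] rho_psi[of t y] by simp

lemma Cspace_ext: "x \<in> Cspace \<Longrightarrow> t < 0 \<Longrightarrow> x t = undefined"
  unfolding Cspace_def extensional_def by auto

lemma psi_phi: "x \<in> Cspace \<Longrightarrow> psi (phi x) = x"
proof
  fix t assume x: "x \<in> Cspace"
  show "psi (phi x) t = x t"
  proof (cases "0 \<le> t")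
    case True
    then show ?thesis using rho_nonneg[OF True, of x]
      by (simp add: psi_apply A_phi phi_apply tau_rho)
  next
    case False then show ?thesis using Cspace_ext[OF x] by (simp add: psi_def)
  qed
qed

lemma phi_psi: "y \<in> Cspace \<Longrightarrow> phi (psi y) = y"
proof
  fix u assume y: "y \<in> Cspace"
  show "phi (psi y) u = y u"
  proof (cases "0 \<le> u")
    case True
    have t0: "0 \<le> tau_bar \<sigma> h u (psi y)" using tau_nonneg True by simp
    have "A_bar \<sigma> h (tau_bar \<sigma> h u (psi y)) y = u"
      using rho_psi[OF t0, of y] rho_tau[OF True] by simp
    then show ?thesis using True t0 by (simp add: psi_apply phi_apply)
  next
    case False then show ?thesis using Cspace_ext[OF y] by (simp add: time_change_def)
  qed
qed

lemma phi_Cspace: "x \<in> Cspace \<Longrightarrow> phi x \<in> Cspace"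
proof -
  assume x: "x \<in> Cspace"
  have cx: "continuous_on {0..} x" using x by (simp add: Cspace_def)
  have "continuous_on {0..} (\<lambda>u. x (tau_bar \<sigma> h u x))"
    by (rule continuous_on_compose2[OF cx tau_cont]) (auto intro: tau_nonneg)
  then have "continuous_on {0..} (phi x)"
    by (rule continuous_on_cong[THEN iffD1, rotated 2]) (auto simp: time_change_def)
  then show ?thesis by (simp add: Cspace_def time_change_def)
qed

lemma A_cont: "continuous_on {0..} (\<lambda>t. A_bar \<sigma> h t y)"
proof -
  have "continuous_on {0..} (\<lambda>t. rho_bar \<sigma> h t (psi y))" by (rule rho_cont)
  then show ?thesis by (rule continuous_on_cong[THEN iffD1, rotated 2]) (auto simp: rho_psi)
qed

lemma psi_Cspace: "y \<in> Cspace \<Longrightarrow> psi y \<in> Cspace"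
proof -
  assume y: "y \<in> Cspace"
  have cy: "continuous_on {0..} y" using y by (simp add: Cspace_def)
  have "continuous_on {0..} (\<lambda>t. y (A_bar \<sigma> h t y))"
    by (rule continuous_on_compose2[OF cy A_cont]) (auto intro: A_nonneg)
  then have "continuous_on {0..} (psi y)"
    by (rule continuous_on_cong[THEN iffD1, rotated 2]) (auto simp: psi_def)
  then show ?thesis by (simp add: Cspace_def psi_def)
qed

end

definition gens :: "real \<Rightarrow> (real \<Rightarrow> real) set set" where
  "gens s = {(\<lambda>x. x r) -` B \<inter> Cspace | r B. r \<in> {0..s} \<and> B \<in> sets borel}"

lemma gens_pow: "gens s \<subseteq> Pow Cspace" by (auto simp: gens_def)

lemma space_G[simp]: "space (coord_gen s) = Cspace"
  unfolding coord_gen_def by (rule space_measure_of) (use gens_pow[unfolded gens_def] in auto)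

lemma sets_G: "sets (coord_gen s) = sigma_sets Cspace (gens s)"
  unfolding coord_gen_def gens_def by (rule sets_measure_of) (use gens_pow[unfolded gens_def] in auto)

lemma Cspace_in_G[simp]: "Cspace \<in> sets (coord_gen s)"
  using sets.top[of "coord_gen s"] by simp

lemma G_mono: "s \<le> s' \<Longrightarrow> sets (coord_gen s) \<subseteq> sets (coord_gen s')"
  unfolding sets_G
proof (rule sigma_sets_mono')
  assume ss: "s \<le> s'"
  show "gens s \<subseteq> gens s'"
  proof
    fix A assume "A \<in> gens s"
    then obtain r B where "A = (\<lambda>x. x r) -` B \<inter> Cspace" "r \<in> {0..s}" "B \<in> sets borel"
      by (auto simp: gens_def)
    then show "A \<in> gens s'" unfolding gens_def using ss
      by (intro CollectI exI[of _ r] exI[of _ B]) auto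
  qed
qed

lemma coord_meas: "r \<in> {0..s} \<Longrightarrow> (\<lambda>x. x r) \<in> borel_measurable (coord_gen s)"
  by (rule measurableI) (auto simp: sets_G gens_def)

lemma Int_sets_pow: "(\<Inter>s\<in>{t<..}. sets (coord_gen s)) \<subseteq> Pow Cspace"
proof -
  have P: "sets (coord_gen (t+1)) \<subseteq> Pow Cspace" using sets.sets_into_space[of _ "coord_gen (t+1)"] by auto
  show ?thesis
  proof
    fix A assume "A \<in> (\<Inter>s\<in>{t<..}. sets (coord_gen s))"
    then have "A \<in> sets (coord_gen (t+1))" by auto
    then show "A \<in> Pow Cspace" using P by auto
  qed
qed

lemma space_F[simp]: "space (canon_filtr t) = Cspace"
  unfolding canon_filtr_def by (rule space_measure_of) (rule Int_sets_pow)

lemma sets_F: "sets (canon_filtr t) = sigma_sets Cspace (\<Inter>s\<in>{t<..}. sets (coord_gen s))"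
  unfolding canon_filtr_def by (rule sets_measure_of) (rule Int_sets_pow)

lemma F_sub_G: "t < s \<Longrightarrow> sets (canon_filtr t) \<subseteq> sets (coord_gen s)"
proof -
  assume ts: "t < s"
  have "(\<Inter>s\<in>{t<..}. sets (coord_gen s)) \<subseteq> sets (coord_gen s)" using ts by auto
  then have "sigma_sets (space (coord_gen s)) (\<Inter>s\<in>{t<..}. sets (coord_gen s)) \<subseteq> sets (coord_gen s)"
    by (rule sets.sigma_sets_subset)
  then show ?thesis by (simp add: sets_F)
qed

lemma G_to_F: "(\<And>s. t < s \<Longrightarrow> A \<in> sets (coord_gen s)) \<Longrightarrow> A \<in> sets (canon_filtr t)"
  unfolding sets_F by (rule sigma_sets.Basic) auto

definition PS :: "((real \<Rightarrow> real) \<Rightarrow> real) \<Rightarrow> (real \<Rightarrow> real) set set" where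
  "PS S = {A. \<forall>t. {\<omega>\<in>A. S \<omega> \<le> t} \<in> sets (canon_filtr t)}"

lemma PS_pow: "PS S \<subseteq> Pow Cspace"
proof
  fix A assume A: "A \<in> PS S"
  show "A \<in> Pow Cspace"
  proof (rule PowI, rule subsetI)
    fix x assume x: "x \<in> A"
    have "{\<omega>\<in>A. S \<omega> \<le> S x} \<in> sets (canon_filtr (S x))" using A by (simp add: PS_def)
    then have "{\<omega>\<in>A. S \<omega> \<le> S x} \<subseteq> Cspace" using sets.sets_into_space[of _ "canon_filtr (S x)"] by auto
    then show "x \<in> Cspace" using x by auto
  qed
qed

lemma filtr: "filtration Cspace canon_filtr"
proof
  show "space (canon_filtr i) = Cspace" for i by simp
  fix i j :: real assume ij: "i \<le> j"
  have "(\<Inter>s\<in>{i<..}. sets (coord_gen s)) \<subseteq> (\<Inter>s\<in>{j<..}. sets (coord_gen s))" using ij by auto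
  then show "sets (canon_filtr i) \<subseteq> sets (canon_filtr j)"
    unfolding sets_F by (rule sigma_sets_mono')
qed

lemma stopped_def': "stopped_sigma S = sigma Cspace (PS S)"
  unfolding stopped_sigma_def PS_def by (rule filtration.pre_sigma_def[OF filtr])

lemma space_stopped[simp]: "space (stopped_sigma S) = Cspace"
  unfolding stopped_def' by (rule space_measure_of) (rule PS_pow)

lemma sets_stopped: "sets (stopped_sigma S) = sigma_sets Cspace (PS S)"
  unfolding stopped_def' by (rule sets_measure_of) (rule PS_pow)

lemma PS_in_stopped: "A \<in> PS S \<Longrightarrow> A \<in> sets (stopped_sigma S)"
  unfolding sets_stopped by (rule sigma_sets.Basic)

lemma space_Cmeas[simp]: "space Cmeas = Cspace"
  unfolding Cmeas_def by (auto simp: space_restrict_space space_PiM Cspace_def extensional_def PiE_def)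

lemma G_sub_Cmeas: "sets (coord_gen s) \<subseteq> sets Cmeas"
proof -
  have "gens s \<subseteq> sets Cmeas"
  proof
    fix A assume "A \<in> gens s"
    then obtain r B where rB: "A = (\<lambda>x. x r) -` B \<inter> Cspace" "r \<in> {0..s}" "B \<in> sets borel"
      by (auto simp: gens_def)
    have "(\<lambda>x. x r) \<in> borel_measurable Cmeas"
      unfolding Cmeas_def by (rule measurable_restrict_space1) (use rB in \<open>auto intro: measurable_component_singleton\<close>)
    then have "(\<lambda>x. x r) -` B \<inter> space Cmeas \<in> sets Cmeas" using rB(3) by (rule measurable_sets)
    then show "A \<in> sets Cmeas" using rB by simp
  qed
  then have "sigma_sets (space Cmeas) (gens s) \<subseteq> sets Cmeas" by (rule sets.sigma_sets_subset)
  then show ?thesis by (simp add: sets_G)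
qed

lemma F_sub_Cmeas: "sets (canon_filtr t) \<subseteq> sets Cmeas"
  using F_sub_G[of t "t+1"] G_sub_Cmeas by auto

lemma stopped_sub_Cmeas: "sets (stopped_sigma S) \<subseteq> sets Cmeas"
proof -
  have "PS S \<subseteq> sets Cmeas"
  proof
    fix A assume A: "A \<in> PS S"
    have "A = (\<Union>n::nat. {\<omega>\<in>A. S \<omega> \<le> real n})"
    proof (safe)
      fix x assume "x \<in> A"
      obtain n :: nat where "S x \<le> real n" using real_arch_simple by blast
      then show "x \<in> (\<Union>n::nat. {\<omega>\<in>A. S \<omega> \<le> real n})" using \<open>x \<in> A\<close> by auto
    qed
    also have "\<dots> \<in> sets Cmeas"
      using A F_sub_Cmeas by (auto simp: PS_def)
    finally show "A \<in> sets Cmeas" .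
  qed
  then have "sigma_sets (space Cmeas) (PS S) \<subseteq> sets Cmeas" by (rule sets.sigma_sets_subset)
  then show ?thesis by (simp add: sets_stopped)
qed

lemma subalg_stopped: "subalgebra Cmeas (stopped_sigma S)"
  unfolding subalgebra_def using stopped_sub_Cmeas by simp

lemma pullback:
  assumes D: "D \<in> sets (coord_gen s)"
    and Phi: "\<And>x. x \<in> D \<Longrightarrow> Phi x \<in> Cspace"
    and comp: "\<And>r. r \<in> {0..c} \<Longrightarrow> \<exists>g. g \<in> borel_measurable (coord_gen s) \<and> (\<forall>x\<in>D. g x = Phi x r)"
    and A: "A \<in> sets (coord_gen c)"
  shows "{x\<in>D. Phi x \<in> A} \<in> sets (coord_gen s)"
proof -
  have "A \<in> sigma_sets Cspace (gens c)" using A by (simp add: sets_G)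
  then show ?thesis
  proof (induction rule: sigma_sets.induct)
    case (Basic a)
    then obtain r B where rB: "a = (\<lambda>y. y r) -` B \<inter> Cspace" "r \<in> {0..c}" "B \<in> sets borel"
      by (auto simp: gens_def)
    obtain g where g: "g \<in> borel_measurable (coord_gen s)" "\<forall>x\<in>D. g x = Phi x r" using comp[OF rB(2)] by blast
    have "g -` B \<inter> space (coord_gen s) \<in> sets (coord_gen s)" using g(1) rB(3) by (rule measurable_sets)
    then have "(g -` B \<inter> Cspace) \<inter> D \<in> sets (coord_gen s)" using D by auto
    moreover have "(g -` B \<inter> Cspace) \<inter> D = {x\<in>D. Phi x \<in> a}"
      using g(2) rB(1) Phi D sets.sets_into_space[OF D] by auto
    ultimately show ?case by simp
  next
    case Empty then show ?case by simp
  next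
    case (Compl a)
    have "{x\<in>D. Phi x \<in> Cspace - a} = D - {x\<in>D. Phi x \<in> a}" using Phi by auto
    then show ?case using Compl D by auto
  next
    case (Union a)
    have "{x\<in>D. Phi x \<in> \<Union> (range a)} = (\<Union>i. {x\<in>D. Phi x \<in> a i})" by auto
    then show ?case using Union by auto
  qed
qed

lemma Cspace_cont: "x \<in> Cspace \<Longrightarrow> continuous_on {0..} x"
  by (simp add: Cspace_def)

lemma floor_approx:
  fixes t :: real
  shows "(\<lambda>n. real_of_int \<lfloor>t * real (Suc n)\<rfloor> / real (Suc n)) \<longlonglongrightarrow> t"
proof (rule tendsto_sandwich[where f="\<lambda>n. t - inverse (real (Suc n))" and h="\<lambda>n. t"])
  show "\<forall>\<^sub>F n in sequentially. t - inverse (real (Suc n)) \<le> real_of_int \<lfloor>t * real (Suc n)\<rfloor> / real (Suc n)"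
  proof (intro always_eventually allI)
    fix n
    define N where "N = real (Suc n)"
    have N: "0 < N" by (simp add: N_def)
    have "t * N - 1 \<le> real_of_int \<lfloor>t * N\<rfloor>" by linarith
    moreover have "(t - inverse N) * N = t * N - 1" using N by (simp add: algebra_simps)
    ultimately have "(t - inverse N) * N \<le> real_of_int \<lfloor>t * N\<rfloor>" by simp
    then have "t - inverse N \<le> real_of_int \<lfloor>t * N\<rfloor> / N" using N by (simp add: pos_le_divide_eq)
    then show "t - inverse (real (Suc n)) \<le> real_of_int \<lfloor>t * real (Suc n)\<rfloor> / real (Suc n)"
      unfolding N_def .
  qed
  show "\<forall>\<^sub>F n in sequentially. real_of_int \<lfloor>t * real (Suc n)\<rfloor> / real (Suc n) \<le> t"
  proof (intro always_eventually allI)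
    fix n
    have "real_of_int \<lfloor>t * real (Suc n)\<rfloor> \<le> t * real (Suc n)" by linarith
    then show "real_of_int \<lfloor>t * real (Suc n)\<rfloor> / real (Suc n) \<le> t"
      by (simp add: field_simps del: of_nat_Suc)
  qed
  show "(\<lambda>n. t - inverse (real (Suc n))) \<longlonglongrightarrow> t"
    using tendsto_diff[OF tendsto_const LIMSEQ_inverse_real_of_nat, of t] by simp
qed simp

lemma eval_random_time:
  assumes tau: "\<tau> \<in> borel_measurable (coord_gen s)" and s: "0 \<le> s"
    and rng: "\<And>x. x \<in> Cspace \<Longrightarrow> 0 \<le> \<tau> x \<and> \<tau> x \<le> s"
  shows "(\<lambda>x. x (\<tau> x)) \<in> borel_measurable (coord_gen s)"
proof (rule borel_measurable_LIMSEQ_real)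
  define cl where "cl v = max 0 (min s v)" for v :: real
  define u where "u n x = x (cl (real_of_int \<lfloor>\<tau> x * real (Suc n)\<rfloor> / real (Suc n)))" for n x
  show "u n \<in> borel_measurable (coord_gen s)" for n
  proof -
    have f: "(\<lambda>x. x (cl (real_of_int k / real (Suc n)))) \<in> borel_measurable (coord_gen s)" for k :: int
      by (rule coord_meas) (use s in \<open>auto simp: cl_def\<close>)
    have g: "(\<lambda>x. \<lfloor>\<tau> x * real (Suc n)\<rfloor>) \<in> measurable (coord_gen s) (count_space UNIV)"
      by (rule measurable_compose[OF _ measurable_real_floor]) (use tau in simp)
    show ?thesis unfolding u_def by (rule measurable_compose_countable[OF f g])
  qed
  fix x assume "x \<in> space (coord_gen s)"
  then have x: "x \<in> Cspace" by simp
  have r: "0 \<le> \<tau> x" "\<tau> x \<le> s" using rng[OF x] by auto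
  let ?v = "\<lambda>n. real_of_int \<lfloor>\<tau> x * real (Suc n)\<rfloor> / real (Suc n)"
  have vin: "0 \<le> ?v n \<and> ?v n \<le> s" for n
  proof
    have "real_of_int \<lfloor>\<tau> x * real (Suc n)\<rfloor> \<le> \<tau> x * real (Suc n)" by linarith
    then have "?v n \<le> \<tau> x" by (simp add: field_simps del: of_nat_Suc)
    then show "?v n \<le> s" using r by simp
    have "0 \<le> \<lfloor>\<tau> x * real (Suc n)\<rfloor>" using r by simp
    then show "0 \<le> ?v n" by simp
  qed
  have "u n x = x (?v n)" for n using vin[of n] by (simp add: u_def cl_def)
  moreover have "(\<lambda>n. x (?v n)) \<longlonglongrightarrow> x (\<tau> x)"
    by (rule continuous_on_tendsto_compose[OF Cspace_cont[OF x] floor_approx]) (use r vin in auto)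
  ultimately show "(\<lambda>n. u n x) \<longlonglongrightarrow> x (\<tau> x)" by simp
qed

context tc begin

lemma sigma2_meas: "g \<in> borel_measurable M \<Longrightarrow> (\<lambda>x. (\<sigma> (g x))\<^sup>2) \<in> borel_measurable M"
  by (intro borel_measurable_power borel_measurable_continuous_on[OF cont])

lemma set_ge_meas: "f \<in> borel_measurable M \<Longrightarrow> {x\<in>space M. (c::real) \<le> f x} \<in> sets M"
proof -
  assume f: "f \<in> borel_measurable M"
  have "f -` {c..} \<inter> space M \<in> sets M" by (rule measurable_sets[OF f]) simp
  moreover have "f -` {c..} \<inter> space M = {x\<in>space M. c \<le> f x}" by auto
  ultimately show ?thesis by simp
qed

lemma set_le_meas: "f \<in> borel_measurable M \<Longrightarrow> {x\<in>space M. f x \<le> (c::real)} \<in> sets M"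
proof -
  assume f: "f \<in> borel_measurable M"
  have "f -` {..c} \<inter> space M \<in> sets M" by (rule measurable_sets[OF f]) simp
  moreover have "f -` {..c} \<inter> space M = {x\<in>space M. f x \<le> c}" by auto
  ultimately show ?thesis by simp
qed

lemma set_less_meas: "f \<in> borel_measurable M \<Longrightarrow> {x\<in>space M. f x < (c::real)} \<in> sets M"
proof -
  assume f: "f \<in> borel_measurable M"
  have "f -` {..<c} \<inter> space M \<in> sets M" by (rule measurable_sets[OF f]) simp
  moreover have "f -` {..<c} \<inter> space M = {x\<in>space M. f x < c}" by auto
  ultimately show ?thesis by simp
qed

lemma set_gr_meas: "f \<in> borel_measurable M \<Longrightarrow> {x\<in>space M. (c::real) < f x} \<in> sets M"
proof -
  assume f: "f \<in> borel_measurable M"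
  have "f -` {c<..} \<inter> space M \<in> sets M" by (rule measurable_sets[OF f]) simp
  moreover have "f -` {c<..} \<inter> space M = {x\<in>space M. c < f x}" by auto
  ultimately show ?thesis by simp
qed

lemma rho_meas:
  assumes q: "0 \<le> q" "q \<le> s"
  shows "(\<lambda>x. rho_bar \<sigma> h q x) \<in> borel_measurable (coord_gen s)"
proof -
  define k where "k = nat \<lfloor>q / h\<rfloor>"
  have kk: "real k * h \<le> q" "q \<le> real (Suc k) * h" using floor_idx[OF q(1)] unfolding k_def by auto
  have pt: "(\<lambda>x. x (real j * h)) \<in> borel_measurable (coord_gen s)" if "j \<le> k" for j
  proof (rule coord_meas)
    have "real j * h \<le> real k * h" using that h by (simp add: mult_right_mono)
    moreover have "0 \<le> real j * h" using h by simp
    ultimately show "real j * h \<in> {0..s}" using kk q by auto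
  qed
  have "(\<lambda>x. Rg x k + (\<sigma> (x (real k * h)))\<^sup>2 * (q - real k * h)) \<in> borel_measurable (coord_gen s)"
  proof -
    have "(\<lambda>x. (\<sigma> (x (real j * h)))\<^sup>2 * h) \<in> borel_measurable (coord_gen s)" if "j \<le> k" for j
      by (rule borel_measurable_times[OF sigma2_meas[OF pt[OF that]] borel_measurable_const])
    then have a: "(\<lambda>x. Rg x k) \<in> borel_measurable (coord_gen s)"
      unfolding Rg_def by (intro borel_measurable_sum) auto
    have b: "(\<lambda>x. (\<sigma> (x (real k * h)))\<^sup>2 * (q - real k * h)) \<in> borel_measurable (coord_gen s)"
      by (rule borel_measurable_times[OF sigma2_meas[OF pt] borel_measurable_const]) simp
    show ?thesis by (rule borel_measurable_add[OF a b])
  qed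
  then show ?thesis using rho_formula[OF kk] by simp
qed

lemma tau_min_meas:
  assumes r: "0 \<le> r" and s: "0 \<le> s"
  shows "(\<lambda>x. min (tau_bar \<sigma> h r x) s) \<in> borel_measurable (coord_gen s)"
proof (rule borel_measurableI_le)
  fix a :: real
  show "{x \<in> space (coord_gen s). min (tau_bar \<sigma> h r x) s \<le> a} \<in> sets (coord_gen s)"
  proof (cases "s \<le> a")
    case True
    then have "{x \<in> space (coord_gen s). min (tau_bar \<sigma> h r x) s \<le> a} = space (coord_gen s)" by auto
    then show ?thesis by simp
  next
    case False
    show ?thesis
    proof (cases "0 \<le> a")
      case True
      have iff: "min (tau_bar \<sigma> h r x) s \<le> a \<longleftrightarrow> r \<le> rho_bar \<sigma> h a x" for x
        using False tau_le_iff[OF r True, of x] by (simp add: min_le_iff_disj)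
      have "{x \<in> space (coord_gen s). min (tau_bar \<sigma> h r x) s \<le> a} = {x \<in> space (coord_gen s). r \<le> rho_bar \<sigma> h a x}"
        by (simp only: iff)
      also have "\<dots> \<in> sets (coord_gen s)"
        using rho_meas[OF True, of s] False by (intro set_ge_meas) auto
      finally show ?thesis .
    next
      case F2: False
      have "{x \<in> space (coord_gen s). min (tau_bar \<sigma> h r x) s \<le> a} = {}"
      proof -
        have "\<not> min (tau_bar \<sigma> h r x) s \<le> a" for x
          using F2 s tau_nonneg[OF r, of x] by (simp add: min_le_iff_disj)
        then show ?thesis by simp
      qed
      then show ?thesis by (metis sets.empty_sets)
    qed
  qed
qed

lemma phi_comp_meas:
  assumes r: "0 \<le> r" and s: "0 \<le> s"
  shows "(\<lambda>x. x (min (tau_bar \<sigma> h r x) s)) \<in> borel_measurable (coord_gen s)"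
  by (rule eval_random_time[OF tau_min_meas[OF r s] s]) (use s tau_nonneg[OF r] in auto)

primrec Acl :: "real \<Rightarrow> (real \<Rightarrow> real) \<Rightarrow> nat \<Rightarrow> real" where
  "Acl s y 0 = 0"
| "Acl s y (Suc i) = min s (Acl s y i + (\<sigma> (y (Acl s y i)))\<^sup>2 * h)"

lemma Acl_range: "0 \<le> s \<Longrightarrow> 0 \<le> Acl s y i \<and> Acl s y i \<le> s"
  by (induction i) (use h in auto)

lemma Acl_eq: "0 \<le> s \<Longrightarrow> Acl s y i = min (A_grid \<sigma> h y i) s"
proof (induction i)
  case 0 then show ?case by simp
next
  case (Suc i)
  have inc: "0 \<le> (\<sigma> (y (A_grid \<sigma> h y i)))\<^sup>2 * h" using h by simp
  show ?case
  proof (cases "A_grid \<sigma> h y i \<le> s")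
    case True then show ?thesis using Suc by (auto simp: min_def)
  next
    case False
    then have "Acl s y i = s" using Suc by simp
    moreover have "0 \<le> (\<sigma> (y s))\<^sup>2 * h" using h by simp
    ultimately show ?thesis using False inc by (auto simp: min_def)
  qed
qed

lemma Acl_meas: "0 \<le> s \<Longrightarrow> (\<lambda>y. Acl s y i) \<in> borel_measurable (coord_gen s)"
proof (induction i)
  case 0 then show ?case by simp
next
  case (Suc i)
  have "(\<lambda>y. y (Acl s y i)) \<in> borel_measurable (coord_gen s)"
    by (rule eval_random_time[OF Suc.IH[OF Suc.prems] Suc.prems]) (use Acl_range[OF Suc.prems] in auto)
  then have "(\<lambda>y. min s (Acl s y i + (\<sigma> (y (Acl s y i)))\<^sup>2 * h)) \<in> borel_measurable (coord_gen s)"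
    using Suc.IH[OF Suc.prems] by (intro borel_measurable_min borel_measurable_add borel_measurable_times sigma2_meas) auto
  then show ?case by simp
qed

lemma A_min_meas:
  assumes r: "0 \<le> r" and s: "0 \<le> s"
  shows "(\<lambda>y. min (A_bar \<sigma> h r y) s) \<in> borel_measurable (coord_gen s)"
proof -
  define k where "k = nat \<lfloor>r / h\<rfloor>"
  have kk: "real k * h \<le> r" "r \<le> real (Suc k) * h" using floor_idx[OF r] unfolding k_def by auto
  have eq: "min (A_bar \<sigma> h r y) s = min s (Acl s y k + (\<sigma> (y (Acl s y k)))\<^sup>2 * (r - real k * h))" for y
  proof (cases "A_grid \<sigma> h y k \<le> s")
    case True then show ?thesis using A_formula[OF kk, of y] Acl_eq[OF s, of y k] by (auto simp: min_def)
  next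
    case False
    have "0 \<le> (\<sigma> (y (A_grid \<sigma> h y k)))\<^sup>2 * (r - real k * h)" "0 \<le> (\<sigma> (y s))\<^sup>2 * (r - real k * h)"
      using kk by auto
    then show ?thesis using False A_formula[OF kk, of y] Acl_eq[OF s, of y k] by (auto simp: min_def)
  qed
  have "(\<lambda>y. y (Acl s y k)) \<in> borel_measurable (coord_gen s)"
    by (rule eval_random_time[OF Acl_meas[OF s] s]) (use Acl_range[OF s] in auto)
  then have "(\<lambda>y. min s (Acl s y k + (\<sigma> (y (Acl s y k)))\<^sup>2 * (r - real k * h))) \<in> borel_measurable (coord_gen s)"
    using Acl_meas[OF s] by (intro borel_measurable_min borel_measurable_add borel_measurable_times sigma2_meas) auto
  then show ?thesis unfolding eq .
qed

lemma psi_comp_meas: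
  assumes r: "0 \<le> r" and s: "0 \<le> s"
  shows "(\<lambda>y. y (min (A_bar \<sigma> h r y) s)) \<in> borel_measurable (coord_gen s)"
  by (rule eval_random_time[OF A_min_meas[OF r s] s]) (use s A_nonneg[OF r] in auto)

end

lemma PS_const_F: "A \<in> PS (\<lambda>_. c) \<Longrightarrow> A \<in> sets (canon_filtr c)"
proof -
  assume "A \<in> PS (\<lambda>_. c)"
  then have "{\<omega> \<in> A. c \<le> c} \<in> sets (canon_filtr c)" unfolding PS_def by blast
  then show ?thesis by simp
qed

lemma F_mono: "i \<le> j \<Longrightarrow> sets (canon_filtr i) \<subseteq> sets (canon_filtr j)"
  using filtration.sets_F_mono[OF filtr] by blast

lemma F_PS_const: "A \<in> sets (canon_filtr c) \<Longrightarrow> A \<in> PS (\<lambda>_. c)"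
  unfolding PS_def
proof (intro CollectI allI)
  fix t assume A: "A \<in> sets (canon_filtr c)"
  show "{\<omega> \<in> A. c \<le> t} \<in> sets (canon_filtr t)"
  proof (cases "c \<le> t")
    case True then show ?thesis using A F_mono[OF True] by auto
  next
    case False then show ?thesis by simp
  qed
qed

lemma meas_stopped:
  assumes f: "\<And>x. x \<in> Cspace \<Longrightarrow> f x \<in> Cspace"
    and pre: "\<And>A. A \<in> PS S2 \<Longrightarrow> f -` A \<inter> Cspace \<in> sets (stopped_sigma S1)"
  shows "f \<in> measurable (stopped_sigma S1) (stopped_sigma S2)"
  unfolding stopped_def'[of S2]
  by (rule measurable_measure_of[OF PS_pow]) (use f pre in auto)

lemma cover_nat:
  fixes v \<delta> :: real
  assumes "\<delta> > 0" "v \<ge> 0"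
  shows "\<exists>j::nat. v \<le> real j * \<delta> \<and> (real j - 1) * \<delta> < v"
proof -
  define j where "j = nat \<lceil>v / \<delta>\<rceil>"
  have "real j = of_int \<lceil>v / \<delta>\<rceil>" using assms unfolding j_def by simp
  moreover have "v / \<delta> \<le> of_int \<lceil>v / \<delta>\<rceil>" "of_int \<lceil>v / \<delta>\<rceil> - 1 < v / \<delta>" by linarith+
  ultimately have "v / \<delta> \<le> real j" "real j - 1 < v / \<delta>" by linarith+
  then show ?thesis using assms by (intro exI[of _ j]) (simp add: field_simps)
qed

context tc begin

lemma A_mono: "0 \<le> s \<Longrightarrow> s \<le> t \<Longrightarrow> A_bar \<sigma> h s y \<le> A_bar \<sigma> h t y"
  using A_bounds[of s t y] s0 by (smt (verit) mult_nonneg_nonneg)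

lemma tau_mono: "0 \<le> u \<Longrightarrow> u \<le> v \<Longrightarrow> tau_bar \<sigma> h u x \<le> tau_bar \<sigma> h v x"
  using tau_bounds[of u v x] s1_pos by (smt (verit) divide_nonneg_pos)

lemma tau_upper:
  assumes "0 \<le> u" "u \<le> v" shows "tau_bar \<sigma> h v x \<le> tau_bar \<sigma> h u x + (v - u) / s0"
  using tau_bounds[OF assms, of x] by simp

lemma A_upper:
  assumes "0 \<le> s" "s \<le> t" shows "A_bar \<sigma> h t y \<le> A_bar \<sigma> h s y + s1 * (t - s)"
  using A_bounds[OF assms, of y] by simp

lemma phi1:
  assumes T: "0 \<le> T"
  shows "phi \<in> measurable (stopped_sigma (\<lambda>x. T)) (stopped_sigma (\<lambda>y. A_bar \<sigma> h T y))"
proof (rule meas_stopped)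
  show "\<And>x. x \<in> Cspace \<Longrightarrow> phi x \<in> Cspace" by (rule phi_Cspace)
  fix A assume A: "A \<in> PS (\<lambda>y. A_bar \<sigma> h T y)"
  have "phi -` A \<inter> Cspace \<in> sets (canon_filtr T)"
  proof (rule G_to_F)
    fix s assume sT: "T < s"
    have s: "0 \<le> s" using T sT by simp
    define \<delta> where "\<delta> = (s - T) * s0 / 2"
    have \<delta>: "\<delta> > 0" using sT s0 by (simp add: \<delta>_def)
    define Aj where "Aj j = {y\<in>A. A_bar \<sigma> h T y \<le> real j * \<delta>}" for j :: nat
    define Dj where "Dj j = {x\<in>Cspace. (real j - 1) * \<delta> < rho_bar \<sigma> h T x}" for j :: nat
    have Aj: "Aj j \<in> sets (coord_gen ((real j + 1) * \<delta>))" for j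
    proof -
      have "Aj j \<in> sets (canon_filtr (real j * \<delta>))" using A by (simp add: PS_def Aj_def)
      moreover have "real j * \<delta> < (real j + 1) * \<delta>" using \<delta> by (simp add: algebra_simps)
      ultimately show ?thesis using F_sub_G by blast
    qed
    have Dj: "Dj j \<in> sets (coord_gen s)" for j
      using set_gr_meas[OF rho_meas[OF T less_imp_le[OF sT]], of "(real j - 1) * \<delta>"] by (simp add: Dj_def)
    have piece: "{x\<in>Dj j. phi x \<in> Aj j} \<in> sets (coord_gen s)" for j
    proof (rule pullback[OF Dj])
      show "\<And>x. x \<in> Dj j \<Longrightarrow> phi x \<in> Cspace" by (auto simp: Dj_def intro: phi_Cspace)
      show "Aj j \<in> sets (coord_gen ((real j + 1) * \<delta>))" by (rule Aj)
      fix r assume r: "r \<in> {0..(real j + 1) * \<delta>}"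
      show "\<exists>g. g \<in> borel_measurable (coord_gen s) \<and> (\<forall>x\<in>Dj j. g x = phi x r)"
      proof (intro exI conjI ballI)
        show "(\<lambda>x. x (min (tau_bar \<sigma> h r x) s)) \<in> borel_measurable (coord_gen s)"
          using phi_comp_meas r s by auto
        fix x assume x: "x \<in> Dj j"
        have rT: "0 \<le> rho_bar \<sigma> h T x" using rho_nonneg[OF T] .
        have "tau_bar \<sigma> h r x \<le> s"
        proof (cases "r \<le> rho_bar \<sigma> h T x")
          case True
          then have "tau_bar \<sigma> h r x \<le> T" using tau_le_iff[of r T x] r T by simp
          then show ?thesis using sT by simp
        next
          case False
          have "tau_bar \<sigma> h r x \<le> tau_bar \<sigma> h (rho_bar \<sigma> h T x) x + (r - rho_bar \<sigma> h T x) / s0"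
            using tau_upper[OF rT, of r x] False by simp
          also have "\<dots> = T + (r - rho_bar \<sigma> h T x) / s0" using tau_rho[OF T] by simp
          also have "\<dots> \<le> T + (2 * \<delta>) / s0"
          proof -
            have "r - rho_bar \<sigma> h T x \<le> 2 * \<delta>" using x r by (auto simp: Dj_def algebra_simps)
            then show ?thesis using s0 by (simp add: divide_right_mono)
          qed
          also have "\<dots> = s" using s0 by (simp add: \<delta>_def)
          finally show ?thesis .
        qed
        then show "x (min (tau_bar \<sigma> h r x) s) = phi x r"
          using r by (simp add: phi_apply min_def)
      qed
    qed
    have "phi -` A \<inter> Cspace = (\<Union>j. {x\<in>Dj j. phi x \<in> Aj j})"
    proof (intro equalityI subsetI)
      fix x assume x: "x \<in> phi -` A \<inter> Cspace"
      obtain j :: nat where j: "rho_bar \<sigma> h T x \<le> real j * \<delta>" "(real j - 1) * \<delta> < rho_bar \<sigma> h T x"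
        using cover_nat[OF \<delta> rho_nonneg[OF T]] by blast
      have "A_bar \<sigma> h T (phi x) = rho_bar \<sigma> h T x" by (rule A_phi[OF T])
      then have "x \<in> {x\<in>Dj j. phi x \<in> Aj j}" using x j by (auto simp: Dj_def Aj_def)
      then show "x \<in> (\<Union>j. {x\<in>Dj j. phi x \<in> Aj j})" by blast
    next
      fix x assume "x \<in> (\<Union>j. {x\<in>Dj j. phi x \<in> Aj j})"
      then show "x \<in> phi -` A \<inter> Cspace" by (auto simp: Dj_def Aj_def)
    qed
    also have "\<dots> \<in> sets (coord_gen s)" using piece by auto
    finally show "phi -` A \<inter> Cspace \<in> sets (coord_gen s)" .
  qed
  then show "phi -` A \<inter> Cspace \<in> sets (stopped_sigma (\<lambda>x. T))"
    by (intro PS_in_stopped F_PS_const)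
qed


lemma psi1:
  assumes T: "0 \<le> T"
  shows "psi \<in> measurable (stopped_sigma (\<lambda>y. A_bar \<sigma> h T y)) (stopped_sigma (\<lambda>x. T))"
proof (rule meas_stopped)
  show "\<And>x. x \<in> Cspace \<Longrightarrow> psi x \<in> Cspace" by (rule psi_Cspace)
  fix A assume A: "A \<in> PS (\<lambda>x. T)"
  have AF: "A \<in> sets (canon_filtr T)" using PS_const_F[OF A] .
  have "psi -` A \<inter> Cspace \<in> PS (\<lambda>y. A_bar \<sigma> h T y)"
    unfolding PS_def
  proof (intro CollectI allI)
    fix t
    show "{y \<in> psi -` A \<inter> Cspace. A_bar \<sigma> h T y \<le> t} \<in> sets (canon_filtr t)"
    proof (cases "0 \<le> t")
      case False
      then have "{y \<in> psi -` A \<inter> Cspace. A_bar \<sigma> h T y \<le> t} = {}"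
        using A_nonneg[OF T] by (auto simp: not_le intro: less_le_trans)
      then show ?thesis by (metis sets.empty_sets)
    next
      case t: True
      show ?thesis
      proof (rule G_to_F)
        fix s assume ts: "t < s"
        have s: "0 \<le> s" using t ts by simp
        define \<epsilon> where "\<epsilon> = (s - t) / (2 * s1)"
        have \<epsilon>: "\<epsilon> > 0" using ts s1_pos by (simp add: \<epsilon>_def)
        define D where "D = {y\<in>Cspace. A_bar \<sigma> h T y \<le> t}"
        have D: "D \<in> sets (coord_gen s)"
        proof -
          have "D = {y\<in>space (coord_gen s). min (A_bar \<sigma> h T y) s \<le> t}"
            using ts by (auto simp: D_def min_le_iff_disj)
          also have "\<dots> \<in> sets (coord_gen s)" by (rule set_le_meas[OF A_min_meas[OF T s]])
          finally show ?thesis .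
        qed
        have AG: "A \<in> sets (coord_gen (T + \<epsilon>))" using AF F_sub_G[of T "T + \<epsilon>"] \<epsilon> by auto
        have piece: "{y\<in>D. psi y \<in> A} \<in> sets (coord_gen s)"
        proof (rule pullback[OF D _ _ AG])
          show "\<And>x. x \<in> D \<Longrightarrow> psi x \<in> Cspace" by (auto simp: D_def intro: psi_Cspace)
          fix r assume r: "r \<in> {0..T + \<epsilon>}"
          show "\<exists>g. g \<in> borel_measurable (coord_gen s) \<and> (\<forall>y\<in>D. g y = psi y r)"
          proof (intro exI conjI ballI)
            show "(\<lambda>y. y (min (A_bar \<sigma> h r y) s)) \<in> borel_measurable (coord_gen s)"
              using psi_comp_meas r s by auto
            fix y assume y: "y \<in> D"
            have "A_bar \<sigma> h r y \<le> s"
            proof (cases "r \<le> T")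
              case True
              then have "A_bar \<sigma> h r y \<le> A_bar \<sigma> h T y" using A_mono r by auto
              then show ?thesis using y ts by (auto simp: D_def)
            next
              case False
              have "A_bar \<sigma> h r y \<le> A_bar \<sigma> h T y + s1 * (r - T)" using A_upper[OF T, of r y] False by simp
              also have "\<dots> \<le> t + s1 * \<epsilon>"
                using y r s1_pos by (intro add_mono mult_left_mono) (auto simp: D_def)
              also have "\<dots> \<le> s"
              proof -
                have e: "s1 * \<epsilon> = (s - t) / 2" using s1_pos by (simp add: \<epsilon>_def)
                show ?thesis unfolding e using ts by (simp add: field_simps)
              qed
              finally show ?thesis .
            qed
            then show "y (min (A_bar \<sigma> h r y) s) = psi y r"
              using r by (simp add: psi_apply min_def)
          qed
        qed
        have "{y \<in> psi -` A \<inter> Cspace. A_bar \<sigma> h T y \<le> t} = {y\<in>D. psi y \<in> A}"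
          by (auto simp: D_def)
        then show "{y \<in> psi -` A \<inter> Cspace. A_bar \<sigma> h T y \<le> t} \<in> sets (coord_gen s)"
          using piece by simp
      qed
    qed
  qed
  then show "psi -` A \<inter> Cspace \<in> sets (stopped_sigma (\<lambda>y. A_bar \<sigma> h T y))"
    by (rule PS_in_stopped)
qed

lemma phi2:
  assumes a: "0 \<le> a"
  shows "phi \<in> measurable (stopped_sigma (\<lambda>x. tau_bar \<sigma> h a x)) (stopped_sigma (\<lambda>y. a))"
proof (rule meas_stopped)
  show "\<And>x. x \<in> Cspace \<Longrightarrow> phi x \<in> Cspace" by (rule phi_Cspace)
  fix A assume A: "A \<in> PS (\<lambda>y. a)"
  have AF: "A \<in> sets (canon_filtr a)" using PS_const_F[OF A] .
  have "phi -` A \<inter> Cspace \<in> PS (\<lambda>x. tau_bar \<sigma> h a x)"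
    unfolding PS_def
  proof (intro CollectI allI)
    fix t
    show "{x \<in> phi -` A \<inter> Cspace. tau_bar \<sigma> h a x \<le> t} \<in> sets (canon_filtr t)"
    proof (cases "0 \<le> t")
      case False
      then have "{x \<in> phi -` A \<inter> Cspace. tau_bar \<sigma> h a x \<le> t} = {}"
        using tau_nonneg[OF a] by (auto simp: not_le intro: less_le_trans)
      then show ?thesis by (metis sets.empty_sets)
    next
      case t: True
      show ?thesis
      proof (rule G_to_F)
        fix s assume ts: "t < s"
        have s: "0 \<le> s" using t ts by simp
        define \<epsilon> where "\<epsilon> = (s - t) * s0 / 2"
        have \<epsilon>: "\<epsilon> > 0" using ts s0 by (simp add: \<epsilon>_def)
        define D where "D = {x\<in>Cspace. tau_bar \<sigma> h a x \<le> t}"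
        have D: "D \<in> sets (coord_gen s)"
        proof -
          have "D = {x\<in>space (coord_gen s). a \<le> rho_bar \<sigma> h t x}"
            using tau_le_iff[OF a t] by (auto simp: D_def)
          also have "\<dots> \<in> sets (coord_gen s)" by (rule set_ge_meas[OF rho_meas[OF t less_imp_le[OF ts]]])
          finally show ?thesis .
        qed
        have AG: "A \<in> sets (coord_gen (a + \<epsilon>))" using AF F_sub_G[of a "a + \<epsilon>"] \<epsilon> by auto
        have piece: "{x\<in>D. phi x \<in> A} \<in> sets (coord_gen s)"
        proof (rule pullback[OF D _ _ AG])
          show "\<And>x. x \<in> D \<Longrightarrow> phi x \<in> Cspace" by (auto simp: D_def intro: phi_Cspace)
          fix r assume r: "r \<in> {0..a + \<epsilon>}"
          show "\<exists>g. g \<in> borel_measurable (coord_gen s) \<and> (\<forall>x\<in>D. g x = phi x r)"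
          proof (intro exI conjI ballI)
            show "(\<lambda>x. x (min (tau_bar \<sigma> h r x) s)) \<in> borel_measurable (coord_gen s)"
              using phi_comp_meas r s by auto
            fix x assume x: "x \<in> D"
            have "tau_bar \<sigma> h r x \<le> s"
            proof (cases "r \<le> a")
              case True
              then have "tau_bar \<sigma> h r x \<le> tau_bar \<sigma> h a x" using tau_mono r by auto
              then show ?thesis using x ts by (auto simp: D_def)
            next
              case False
              have "tau_bar \<sigma> h r x \<le> tau_bar \<sigma> h a x + (r - a) / s0" using tau_upper[OF a, of r x] False by simp
              also have "\<dots> \<le> t + \<epsilon> / s0"
                using x r s0 by (intro add_mono divide_right_mono) (auto simp: D_def)
              also have "\<dots> \<le> s"
              proof -
                have e: "\<epsilon> / s0 = (s - t) / 2" using s0 by (simp add: \<epsilon>_def)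
                show ?thesis unfolding e using ts by (simp add: field_simps)
              qed
              finally show ?thesis .
            qed
            then show "x (min (tau_bar \<sigma> h r x) s) = phi x r"
              using r by (simp add: phi_apply min_def)
          qed
        qed
        have "{x \<in> phi -` A \<inter> Cspace. tau_bar \<sigma> h a x \<le> t} = {x\<in>D. phi x \<in> A}"
          by (auto simp: D_def)
        then show "{x \<in> phi -` A \<inter> Cspace. tau_bar \<sigma> h a x \<le> t} \<in> sets (coord_gen s)"
          using piece by simp
      qed
    qed
  qed
  then show "phi -` A \<inter> Cspace \<in> sets (stopped_sigma (\<lambda>x. tau_bar \<sigma> h a x))"
    by (rule PS_in_stopped)
qed

lemma psi2:
  assumes a: "0 \<le> a"
  shows "psi \<in> measurable (stopped_sigma (\<lambda>y. a)) (stopped_sigma (\<lambda>x. tau_bar \<sigma> h a x))"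
proof (rule meas_stopped)
  show "\<And>x. x \<in> Cspace \<Longrightarrow> psi x \<in> Cspace" by (rule psi_Cspace)
  fix A assume A: "A \<in> PS (\<lambda>x. tau_bar \<sigma> h a x)"
  have "psi -` A \<inter> Cspace \<in> sets (canon_filtr a)"
  proof (rule G_to_F)
    fix s assume sa: "a < s"
    have s: "0 \<le> s" using a sa by simp
    define \<delta> where "\<delta> = (s - a) / (4 * s1)"
    have \<delta>: "\<delta> > 0" using sa s1_pos by (simp add: \<delta>_def)
    define Aj where "Aj j = {x\<in>A. tau_bar \<sigma> h a x \<le> real j * \<delta>}" for j :: nat
    define Dj where "Dj j = {y\<in>Cspace. (real j - 1) * \<delta> < tau_bar \<sigma> h a (psi y)}" for j :: nat
    have Aj: "Aj j \<in> sets (coord_gen ((real j + 1) * \<delta>))" for j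
    proof -
      have "Aj j \<in> sets (canon_filtr (real j * \<delta>))" using A by (simp add: PS_def Aj_def)
      moreover have "real j * \<delta> < (real j + 1) * \<delta>" using \<delta> by (simp add: algebra_simps)
      ultimately show ?thesis using F_sub_G by blast
    qed
    have Dj: "Dj j \<in> sets (coord_gen s)" for j
    proof (cases "0 \<le> (real j - 1) * \<delta>")
      case False
      then have "Dj j = space (coord_gen s)"
        using tau_nonneg[OF a] by (auto simp: Dj_def not_le intro: less_le_trans)
      then show ?thesis by simp
    next
      case q: True
      have "Dj j = {y\<in>space (coord_gen s). min (A_bar \<sigma> h ((real j - 1) * \<delta>) y) s < a}"
      proof (intro set_eqI iffI)
        fix y assume "y \<in> Dj j"
        then have y: "y \<in> Cspace" "\<not> tau_bar \<sigma> h a (psi y) \<le> (real j - 1) * \<delta>" by (auto simp: Dj_def)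
        then have "\<not> a \<le> rho_bar \<sigma> h ((real j - 1) * \<delta>) (psi y)" using tau_le_iff[OF a q] by simp
        then show "y \<in> {y\<in>space (coord_gen s). min (A_bar \<sigma> h ((real j - 1) * \<delta>) y) s < a}"
          using y rho_psi[OF q, of y] by (simp add: min_less_iff_disj)
      next
        fix y assume "y \<in> {y\<in>space (coord_gen s). min (A_bar \<sigma> h ((real j - 1) * \<delta>) y) s < a}"
        then have y: "y \<in> Cspace" "A_bar \<sigma> h ((real j - 1) * \<delta>) y < a" using sa by (auto simp: min_less_iff_disj)
        then have "\<not> a \<le> rho_bar \<sigma> h ((real j - 1) * \<delta>) (psi y)" using rho_psi[OF q, of y] by simp
        then have "\<not> tau_bar \<sigma> h a (psi y) \<le> (real j - 1) * \<delta>" using tau_le_iff[OF a q, of "psi y"] by simp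
        then show "y \<in> Dj j" using y by (auto simp: Dj_def)
      qed
      also have "\<dots> \<in> sets (coord_gen s)" by (rule set_less_meas[OF A_min_meas[OF q s]])
      finally show ?thesis .
    qed
    have piece: "{y\<in>Dj j. psi y \<in> Aj j} \<in> sets (coord_gen s)" for j
    proof (rule pullback[OF Dj])
      show "\<And>x. x \<in> Dj j \<Longrightarrow> psi x \<in> Cspace" by (auto simp: Dj_def intro: psi_Cspace)
      show "Aj j \<in> sets (coord_gen ((real j + 1) * \<delta>))" by (rule Aj)
      fix r assume r: "r \<in> {0..(real j + 1) * \<delta>}"
      show "\<exists>g. g \<in> borel_measurable (coord_gen s) \<and> (\<forall>y\<in>Dj j. g y = psi y r)"
      proof (intro exI conjI ballI)
        show "(\<lambda>y. y (min (A_bar \<sigma> h r y) s)) \<in> borel_measurable (coord_gen s)"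
          using psi_comp_meas r s by auto
        fix y assume y: "y \<in> Dj j"
        define q0 where "q0 = tau_bar \<sigma> h a (psi y)"
        have q0: "0 \<le> q0" using tau_nonneg[OF a] by (simp add: q0_def)
        have Aq0: "A_bar \<sigma> h q0 y = a" using rho_psi[OF q0, of y] rho_tau[OF a, of "psi y"] by (simp add: q0_def)
        have "A_bar \<sigma> h r y \<le> s"
        proof (cases "r \<le> q0")
          case True
          then have "A_bar \<sigma> h r y \<le> A_bar \<sigma> h q0 y" using A_mono r by auto
          then show ?thesis using Aq0 sa by simp
        next
          case False
          have "A_bar \<sigma> h r y \<le> A_bar \<sigma> h q0 y + s1 * (r - q0)" using A_upper[OF q0, of r y] False by simp
          also have "\<dots> \<le> a + s1 * (2 * \<delta>)"
          proof -
            have "r - q0 \<le> 2 * \<delta>" using y r by (auto simp: Dj_def q0_def algebra_simps)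
            then show ?thesis using Aq0 s1_pos by (simp add: mult_left_mono)
          qed
          also have "\<dots> \<le> s" using s1_pos sa by (simp add: \<delta>_def field_simps)
          finally show ?thesis .
        qed
        then show "y (min (A_bar \<sigma> h r y) s) = psi y r"
          using r by (simp add: psi_apply min_def)
      qed
    qed
    have "psi -` A \<inter> Cspace = (\<Union>j. {y\<in>Dj j. psi y \<in> Aj j})"
    proof (intro equalityI subsetI)
      fix y assume y: "y \<in> psi -` A \<inter> Cspace"
      obtain j :: nat where j: "tau_bar \<sigma> h a (psi y) \<le> real j * \<delta>" "(real j - 1) * \<delta> < tau_bar \<sigma> h a (psi y)"
        using cover_nat[OF \<delta> tau_nonneg[OF a]] by blast
      then have "y \<in> {y\<in>Dj j. psi y \<in> Aj j}" using y by (auto simp: Dj_def Aj_def)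
      then show "y \<in> (\<Union>j. {y\<in>Dj j. psi y \<in> Aj j})" by blast
    next
      fix y assume "y \<in> (\<Union>j. {y\<in>Dj j. psi y \<in> Aj j})"
      then show "y \<in> psi -` A \<inter> Cspace" by (auto simp: Dj_def Aj_def)
    qed
    also have "\<dots> \<in> sets (coord_gen s)" using piece by auto
    finally show "psi -` A \<inter> Cspace \<in> sets (coord_gen s)" .
  qed
  then show "psi -` A \<inter> Cspace \<in> sets (stopped_sigma (\<lambda>y. a))"
    by (intro PS_in_stopped F_PS_const)
qed

end

definition epiece :: "(real \<Rightarrow> real) \<Rightarrow> (real \<Rightarrow> real) \<Rightarrow> real \<Rightarrow> real \<Rightarrow> (real \<Rightarrow> real) \<Rightarrow> nat \<Rightarrow> real \<Rightarrow> real" where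
  "epiece b \<sigma> h x0 w k t = (let y = euler_grid b \<sigma> h x0 w k in y + b y * (t - real k * h) + \<sigma> y * (w t - w (real k * h)))"

lemma euler_pos:
  assumes "t > 0" shows "euler_path b \<sigma> h x0 w t = epiece b \<sigma> h x0 w (nat \<lceil>t / h\<rceil> - 1) t"
  using assms by (simp add: euler_path_def epiece_def Let_def)

lemma epiece_left: "epiece b \<sigma> h x0 w k (real k * h) = euler_grid b \<sigma> h x0 w k"
  by (simp add: epiece_def Let_def)

lemma epiece_right: "epiece b \<sigma> h x0 w k (real (Suc k) * h) = euler_grid b \<sigma> h x0 w (Suc k)"
  by (simp add: epiece_def Let_def algebra_simps)

lemma idx_ceil':
  assumes h: "h > 0" and "real j * h < t" "t \<le> real (Suc j) * h"
  shows "nat \<lceil>t / h\<rceil> - 1 = j"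
proof -
  have "real j < t / h" "t / h \<le> real (Suc j)" using assms by (auto simp: field_simps)
  then have "\<lceil>t / h\<rceil> = int (Suc j)" by (subst ceiling_eq_iff) auto
  then show ?thesis by simp
qed

lemma euler_piece:
  assumes h: "h > 0" and t: "real k * h \<le> t" "t \<le> real (Suc k) * h"
  shows "euler_path b \<sigma> h x0 w t = epiece b \<sigma> h x0 w k t"
proof (cases "t = real k * h")
  case True
  show ?thesis
  proof (cases k)
    case 0 then show ?thesis using True by (simp add: euler_path_def epiece_def)
  next
    case (Suc j)
    have "real k > 0" using Suc by simp
    then have tpos: "t > 0" using True h by (simp add: mult_pos_pos)
    have "real j * h < t" "t \<le> real (Suc j) * h" using True Suc h by auto
    then have idx: "nat \<lceil>t / h\<rceil> - 1 = j" by (rule idx_ceil'[OF h])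
    have "euler_path b \<sigma> h x0 w t = epiece b \<sigma> h x0 w j (real (Suc j) * h)"
      using euler_pos[OF tpos] idx True Suc by simp
    also have "\<dots> = euler_grid b \<sigma> h x0 w k" using Suc by (simp only: epiece_right)
    also have "\<dots> = epiece b \<sigma> h x0 w k t" using True by (simp only: epiece_left)
    finally show ?thesis .
  qed
next
  case False
  then have lt: "real k * h < t" using t by simp
  have "0 \<le> real k * h" using h by simp
  then have tpos: "t > 0" using lt by linarith
  have "nat \<lceil>t / h\<rceil> - 1 = k" by (rule idx_ceil'[OF h lt t(2)])
  then show ?thesis using euler_pos[OF tpos] by simp
qed

lemma epiece_cont:
  assumes w: "continuous_on {0..} w" and b: "continuous_on UNIV b" and h: "h > 0"
  shows "continuous_on {real k * h..real (Suc k) * h} (epiece b \<sigma> h x0 w k)"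
proof -
  have "{real k * h..real (Suc k) * h} \<subseteq> {0..}" using h by auto
  then have w': "continuous_on {real k * h..real (Suc k) * h} w" using w by (rule continuous_on_subset[rotated])
  show ?thesis unfolding epiece_def Let_def
    by (intro continuous_intros w')
qed

lemma euler_cont_upto:
  assumes w: "continuous_on {0..} w" and b: "continuous_on UNIV b" and h: "h > 0"
  shows "continuous_on {0..real N * h} (euler_path b \<sigma> h x0 w)"
proof (induction N)
  case 0
  have "{0..real 0 * h} = {0::real}" by simp
  then show ?case by simp
next
  case (Suc N)
  have c2: "continuous_on {real N * h..real (Suc N) * h} (euler_path b \<sigma> h x0 w)"
    using epiece_cont[OF w b h]
    by (rule continuous_on_cong[THEN iffD1, rotated 2]) (auto simp: euler_piece[OF h])
  have "0 \<le> real N * h" "real N * h \<le> real (Suc N) * h" using h by auto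
  then have "{0..real N * h} \<union> {real N * h..real (Suc N) * h} = {0..real (Suc N) * h}"
    by auto
  then show ?case using continuous_on_closed_Un[OF _ _ Suc.IH c2] by simp
qed

lemma euler_cont:
  assumes w: "continuous_on {0..} w" and b: "continuous_on UNIV b" and h: "h > 0"
  shows "continuous_on {0..} (euler_path b \<sigma> h x0 w)"
  unfolding continuous_on_eq_continuous_within
proof
  fix t :: real assume t: "t \<in> {0..}"
  obtain N :: nat where N: "t / h < real N" using reals_Archimedean2 by blast
  then have tN: "t < real N * h" using h by (simp add: field_simps)
  have "continuous (at t within {0..real N * h}) (euler_path b \<sigma> h x0 w)"
    using euler_cont_upto[OF w b h] t tN
    unfolding continuous_on_eq_continuous_within by auto
  moreover have "at t within {0..} = at t within {0..real N * h}"
    by (rule at_within_nhd[of _ "{..<real N * h}"]) (use tN in auto)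
  ultimately show "continuous (at t within {0..}) (euler_path b \<sigma> h x0 w)" by simp
qed

lemma euler_Cspace:
  assumes w: "continuous_on {0..} w" and b: "continuous_on UNIV b" and h: "h > 0"
  shows "euler_path b \<sigma> h x0 w \<in> Cspace"
  using euler_cont[OF assms] by (simp add: Cspace_def euler_path_def)

lemma euler_grid_meas:
  assumes b: "continuous_on UNIV b" and s: "continuous_on UNIV \<sigma>"
    and eta: "\<eta> \<in> borel_measurable M" and W: "\<And>t. t \<ge> 0 \<Longrightarrow> (\<lambda>\<omega>. W t \<omega>) \<in> borel_measurable M"
    and h: "h > 0"
  shows "(\<lambda>\<omega>. euler_grid b \<sigma> h (\<eta> \<omega>) (\<lambda>t. W t \<omega>) i) \<in> borel_measurable M"
proof (induction i)
  case 0 then show ?case using eta by simp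
next
  case (Suc i)
  let ?y = "\<lambda>\<omega>. euler_grid b \<sigma> h (\<eta> \<omega>) (\<lambda>t. W t \<omega>) i"
  have "(\<lambda>\<omega>. ?y \<omega> + b (?y \<omega>) * h + \<sigma> (?y \<omega>) * (W (real (Suc i) * h) \<omega> - W (real i * h) \<omega>)) \<in> borel_measurable M"
    using h by (intro borel_measurable_add borel_measurable_times borel_measurable_diff
        borel_measurable_continuous_on[OF b] borel_measurable_continuous_on[OF s] Suc W borel_measurable_const) auto
  then show ?case by (simp add: Let_def)
qed

lemma euler_meas:
  assumes b: "continuous_on UNIV b" and s: "continuous_on UNIV \<sigma>"
    and eta: "\<eta> \<in> borel_measurable M" and W: "\<And>t. t \<ge> 0 \<Longrightarrow> (\<lambda>\<omega>. W t \<omega>) \<in> borel_measurable M"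
    and Wc: "\<And>\<omega>. \<omega> \<in> space M \<Longrightarrow> continuous_on {0..} (\<lambda>t. W t \<omega>)"
    and h: "h > 0"
  shows "(\<lambda>\<omega>. euler_path b \<sigma> h (\<eta> \<omega>) (\<lambda>t. W t \<omega>)) \<in> measurable M Cmeas"
  unfolding Cmeas_def
proof (rule measurable_restrict_space2)
  show "(\<lambda>\<omega>. euler_path b \<sigma> h (\<eta> \<omega>) (\<lambda>t. W t \<omega>)) \<in> space M \<rightarrow> Cspace"
    using euler_Cspace[OF Wc b h] by auto
  show "(\<lambda>\<omega>. euler_path b \<sigma> h (\<eta> \<omega>) (\<lambda>t. W t \<omega>)) \<in> M \<rightarrow>\<^sub>M Pi\<^sub>M {0..} (\<lambda>_. borel)"
  proof (rule measurable_PiM_single'[where f="\<lambda>i \<omega>. euler_path b \<sigma> h (\<eta> \<omega>) (\<lambda>t. W t \<omega>) i"])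
    fix i :: real assume i: "i \<in> {0..}"
    show "(\<lambda>\<omega>. euler_path b \<sigma> h (\<eta> \<omega>) (\<lambda>t. W t \<omega>) i) \<in> borel_measurable M"
    proof (cases "i = 0")
      case True then show ?thesis using eta by (simp add: euler_path_def)
    next
      case False
      let ?k = "nat \<lceil>i / h\<rceil> - 1"
      let ?y = "\<lambda>\<omega>. euler_grid b \<sigma> h (\<eta> \<omega>) (\<lambda>t. W t \<omega>) ?k"
      have "(\<lambda>\<omega>. ?y \<omega> + b (?y \<omega>) * (i - real ?k * h) + \<sigma> (?y \<omega>) * (W i \<omega> - W (real ?k * h) \<omega>)) \<in> borel_measurable M"
        using h i by (intro borel_measurable_add borel_measurable_times borel_measurable_diff
            borel_measurable_continuous_on[OF b] borel_measurable_continuous_on[OF s] W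
            euler_grid_meas[OF b s eta W h] borel_measurable_const) auto
      then show ?thesis using False i by (simp add: euler_path_def Let_def)
    qed
  next
    show "(\<lambda>\<omega>. euler_path b \<sigma> h (\<eta> \<omega>) (\<lambda>t. W t \<omega>)) \<in> space M \<rightarrow> (\<Pi>\<^sub>E i\<in>{0..}. space borel)"
      by (auto simp: euler_path_def)
  qed
qed

lemma tv_le1:
  assumes "prob_space X" "prob_space Y"
  shows "tv_dist X Y \<le> 1"
  unfolding tv_dist_def
proof (rule cSUP_least)
  show "sets X \<noteq> {}" using sets.empty_sets[of X] by blast
  fix A
  have "0 \<le> measure X A" "measure X A \<le> 1" "0 \<le> measure Y A" "measure Y A \<le> 1"
    using prob_space.prob_le_1[OF assms(1)] prob_space.prob_le_1[OF assms(2)] by auto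
  then show "\<bar>measure X A - measure Y A\<bar> \<le> 1" by linarith
qed

lemma tv_self: "tv_dist X X = 0"
proof -
  have "sets X \<noteq> {}" using sets.empty_sets[of X] by blast
  then show ?thesis unfolding tv_dist_def by simp
qed

lemma deficiency_zero:
  assumes P: "\<And>\<theta>. \<theta> \<in> \<Theta> \<Longrightarrow> prob_space (P \<theta>) \<and> sets (P \<theta>) = sets E"
    and Q: "\<And>\<theta>. \<theta> \<in> \<Theta> \<Longrightarrow> prob_space (Q \<theta>)"
    and g: "g \<in> measurable E G"
    and eq: "\<And>\<theta>. \<theta> \<in> \<Theta> \<Longrightarrow> distr (P \<theta>) G g = Q \<theta>"
  shows "deficiency E P G Q \<Theta> = 0"
  unfolding deficiency_def
proof (rule cInf_eq_minimum)
  define K0 where "K0 = (\<lambda>x. return G (g x))"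
  have K0: "K0 \<in> measurable E (prob_algebra G)"
    unfolding K0_def by (rule measurable_compose[OF g measurable_return_prob_space])
  have "tv_dist (bind (P \<theta>) K0) (Q \<theta>) = 0" if th: "\<theta> \<in> \<Theta>" for \<theta>
  proof -
    have ne: "space (P \<theta>) \<noteq> {}" using P[OF th] prob_space.not_empty by blast
    have gP: "g \<in> measurable (P \<theta>) G" using g P[OF th] by (simp cong: measurable_cong_sets)
    have "bind (P \<theta>) K0 = distr (P \<theta>) G g" unfolding K0_def by (rule bind_return_distr'[OF ne gP])
    then show ?thesis using eq[OF th] tv_self by simp
  qed
  then have eq0: "insert 0 ((\<lambda>\<theta>. tv_dist (bind (P \<theta>) K0) (Q \<theta>)) ` \<Theta>) = {0}" by auto
  show "0 \<in> (\<lambda>K. Sup (insert 0 ((\<lambda>\<theta>. tv_dist (bind (P \<theta>) K) (Q \<theta>)) ` \<Theta>))) ` measurable E (prob_algebra G)"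
  proof (rule image_eqI[of _ _ K0])
    show "0 = Sup (insert 0 ((\<lambda>\<theta>. tv_dist (bind (P \<theta>) K0) (Q \<theta>)) ` \<Theta>))" unfolding eq0 by simp
  qed (rule K0)
  fix y assume "y \<in> (\<lambda>K. Sup (insert 0 ((\<lambda>\<theta>. tv_dist (bind (P \<theta>) K) (Q \<theta>)) ` \<Theta>))) ` measurable E (prob_algebra G)"
  then obtain K where K: "K \<in> measurable E (prob_algebra G)"
    and y: "y = Sup (insert 0 ((\<lambda>\<theta>. tv_dist (bind (P \<theta>) K) (Q \<theta>)) ` \<Theta>))" by blast
  have "tv_dist (bind (P \<theta>) K) (Q \<theta>) \<le> 1" if th: "\<theta> \<in> \<Theta>" for \<theta>
  proof (rule tv_le1[OF _ Q[OF th]])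
    have "P \<theta> \<in> space (prob_algebra E)" using P[OF th] by (simp add: space_prob_algebra)
    then show "prob_space (bind (P \<theta>) K)" by (rule prob_space_bind'[OF _ K])
  qed
  then have "bdd_above (insert 0 ((\<lambda>\<theta>. tv_dist (bind (P \<theta>) K) (Q \<theta>)) ` \<Theta>))"
    by (intro bdd_aboveI[of _ 1]) auto
  then show "0 \<le> y" unfolding y by (rule cSup_upper[rotated]) simp
qed

context tc begin

lemma lecam_transfer:
  assumes Qp: "\<And>\<theta>. \<theta> \<in> \<Theta> \<Longrightarrow> prob_space (Q \<theta>) \<and> sets (Q \<theta>) = sets Cmeas"
    and Qt: "\<And>\<theta>. \<theta> \<in> \<Theta> \<Longrightarrow> Qt \<theta> = distr (Q \<theta>) Cmeas phi"
    and m1: "phi \<in> measurable (stopped_sigma S1) (stopped_sigma S2)"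
    and m2: "psi \<in> measurable (stopped_sigma S2) (stopped_sigma S1)"
    and phiC: "phi \<in> measurable Cmeas Cmeas"
  shows "le_cam_dist (stopped_sigma S1) (\<lambda>\<theta>. restr_to_subalg (Q \<theta>) (stopped_sigma S1))
           (stopped_sigma S2) (\<lambda>\<theta>. restr_to_subalg (Qt \<theta>) (stopped_sigma S2)) \<Theta> = 0"
proof -
  let ?E = "stopped_sigma S1" and ?G = "stopped_sigma S2"
  have spQ: "space (Q \<theta>) = Cspace" if "\<theta> \<in> \<Theta>" for \<theta>
    using sets_eq_imp_space_eq[of "Q \<theta>" Cmeas] Qp[OF that] by simp
  have sub: "subalgebra (Q \<theta>) (stopped_sigma S)" if "\<theta> \<in> \<Theta>" for \<theta> S
    using Qp[OF that] spQ[OF that] stopped_sub_Cmeas[of S] by (simp add: subalgebra_def)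
  have phiQ: "phi \<in> measurable (Q \<theta>) Cmeas" if "\<theta> \<in> \<Theta>" for \<theta>
    using phiC Qp[OF that] by (simp cong: measurable_cong_sets)
  have Qtp: "prob_space (Qt \<theta>) \<and> sets (Qt \<theta>) = sets Cmeas" if th: "\<theta> \<in> \<Theta>" for \<theta>
    using prob_space.prob_space_distr[OF conjunct1[OF Qp[OF th]] phiQ[OF th]] Qt[OF th] by simp
  have spQt: "space (Qt \<theta>) = Cspace" if "\<theta> \<in> \<Theta>" for \<theta>
    using sets_eq_imp_space_eq[of "Qt \<theta>" Cmeas] Qtp[OF that] by simp
  have subt: "subalgebra (Qt \<theta>) (stopped_sigma S)" if "\<theta> \<in> \<Theta>" for \<theta> S
    using Qtp[OF that] spQt[OF that] stopped_sub_Cmeas[of S] by (simp add: subalgebra_def)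
  have emQt: "emeasure (Qt \<theta>) A = emeasure (Q \<theta>) (phi -` A \<inter> Cspace)" if th: "\<theta> \<in> \<Theta>" and A: "A \<in> sets Cmeas" for \<theta> A
    using emeasure_distr[OF phiQ[OF th] A] Qt[OF th] spQ[OF th] by simp
  have d1: "deficiency ?E (\<lambda>\<theta>. restr_to_subalg (Q \<theta>) ?E) ?G (\<lambda>\<theta>. restr_to_subalg (Qt \<theta>) ?G) \<Theta> = 0"
  proof (rule deficiency_zero[OF _ _ m1])
    fix \<theta> assume th: "\<theta> \<in> \<Theta>"
    show "prob_space (restr_to_subalg (Q \<theta>) ?E) \<and> sets (restr_to_subalg (Q \<theta>) ?E) = sets ?E"
      using prob_space_restr_to_subalg[OF sub[OF th] conjunct1[OF Qp[OF th]]] sets_restr_to_subalg[OF sub[OF th]] by simp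
    show "prob_space (restr_to_subalg (Qt \<theta>) ?G)"
      using prob_space_restr_to_subalg[OF subt[OF th] conjunct1[OF Qtp[OF th]]] .
    have sP: "sets (restr_to_subalg (Q \<theta>) ?E) = sets ?E" using sets_restr_to_subalg[OF sub[OF th]] .
    have spP: "space (restr_to_subalg (Q \<theta>) ?E) = Cspace" unfolding space_restr_to_subalg by (rule spQ[OF th])
    have m1P: "phi \<in> measurable (restr_to_subalg (Q \<theta>) ?E) ?G" using m1 sP by (simp cong: measurable_cong_sets)
    show "distr (restr_to_subalg (Q \<theta>) ?E) ?G phi = restr_to_subalg (Qt \<theta>) ?G"
    proof (rule measure_eqI)
      show "sets (distr (restr_to_subalg (Q \<theta>) ?E) ?G phi) = sets (restr_to_subalg (Qt \<theta>) ?G)"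
        using sets_restr_to_subalg[OF subt[OF th]] by simp
      fix A assume "A \<in> sets (distr (restr_to_subalg (Q \<theta>) ?E) ?G phi)"
      then have A: "A \<in> sets ?G" by simp
      have pre: "phi -` A \<inter> Cspace \<in> sets ?E" using measurable_sets[OF m1 A] by simp
      have AC: "A \<in> sets Cmeas" using A stopped_sub_Cmeas by auto
      have "emeasure (distr (restr_to_subalg (Q \<theta>) ?E) ?G phi) A = emeasure (restr_to_subalg (Q \<theta>) ?E) (phi -` A \<inter> Cspace)"
        using emeasure_distr[OF m1P A] spP by simp
      also have "\<dots> = emeasure (Q \<theta>) (phi -` A \<inter> Cspace)"
        by (rule emeasure_restr_to_subalg[OF sub[OF th] pre])
      also have "\<dots> = emeasure (Qt \<theta>) A" using emQt[OF th AC] by simp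
      also have "\<dots> = emeasure (restr_to_subalg (Qt \<theta>) ?G) A"
        by (rule emeasure_restr_to_subalg[OF subt[OF th] A, symmetric])
      finally show "emeasure (distr (restr_to_subalg (Q \<theta>) ?E) ?G phi) A = emeasure (restr_to_subalg (Qt \<theta>) ?G) A" .
    qed
  qed
  have d2: "deficiency ?G (\<lambda>\<theta>. restr_to_subalg (Qt \<theta>) ?G) ?E (\<lambda>\<theta>. restr_to_subalg (Q \<theta>) ?E) \<Theta> = 0"
  proof (rule deficiency_zero[OF _ _ m2])
    fix \<theta> assume th: "\<theta> \<in> \<Theta>"
    show "prob_space (restr_to_subalg (Qt \<theta>) ?G) \<and> sets (restr_to_subalg (Qt \<theta>) ?G) = sets ?G"
      using prob_space_restr_to_subalg[OF subt[OF th] conjunct1[OF Qtp[OF th]]] sets_restr_to_subalg[OF subt[OF th]] by simp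
    show "prob_space (restr_to_subalg (Q \<theta>) ?E)"
      using prob_space_restr_to_subalg[OF sub[OF th] conjunct1[OF Qp[OF th]]] .
    have sP: "sets (restr_to_subalg (Qt \<theta>) ?G) = sets ?G" using sets_restr_to_subalg[OF subt[OF th]] .
    have spP: "space (restr_to_subalg (Qt \<theta>) ?G) = Cspace" unfolding space_restr_to_subalg by (rule spQt[OF th])
    have m2P: "psi \<in> measurable (restr_to_subalg (Qt \<theta>) ?G) ?E" using m2 sP by (simp cong: measurable_cong_sets)
    show "distr (restr_to_subalg (Qt \<theta>) ?G) ?E psi = restr_to_subalg (Q \<theta>) ?E"
    proof (rule measure_eqI)
      show "sets (distr (restr_to_subalg (Qt \<theta>) ?G) ?E psi) = sets (restr_to_subalg (Q \<theta>) ?E)"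
        using sets_restr_to_subalg[OF sub[OF th]] by simp
      fix A assume "A \<in> sets (distr (restr_to_subalg (Qt \<theta>) ?G) ?E psi)"
      then have A: "A \<in> sets ?E" by simp
      have pre: "psi -` A \<inter> Cspace \<in> sets ?G" using measurable_sets[OF m2 A] by simp
      have preC: "psi -` A \<inter> Cspace \<in> sets Cmeas" using pre stopped_sub_Cmeas by auto
      have AC: "A \<subseteq> Cspace" using sets.sets_into_space[OF A] by simp
      have seteq: "phi -` (psi -` A \<inter> Cspace) \<inter> Cspace = A"
      proof (intro equalityI subsetI)
        fix x assume "x \<in> phi -` (psi -` A \<inter> Cspace) \<inter> Cspace"
        then show "x \<in> A" using psi_phi by auto
      next
        fix x assume "x \<in> A"
        then show "x \<in> phi -` (psi -` A \<inter> Cspace) \<inter> Cspace" using AC psi_phi phi_Cspace by auto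
      qed
      have "emeasure (distr (restr_to_subalg (Qt \<theta>) ?G) ?E psi) A = emeasure (restr_to_subalg (Qt \<theta>) ?G) (psi -` A \<inter> Cspace)"
        using emeasure_distr[OF m2P A] spP by simp
      also have "\<dots> = emeasure (Qt \<theta>) (psi -` A \<inter> Cspace)"
        by (rule emeasure_restr_to_subalg[OF subt[OF th] pre])
      also have "\<dots> = emeasure (Q \<theta>) A" using emQt[OF th preC] seteq by simp
      also have "\<dots> = emeasure (restr_to_subalg (Q \<theta>) ?E) A"
        by (rule emeasure_restr_to_subalg[OF sub[OF th] A, symmetric])
      finally show "emeasure (distr (restr_to_subalg (Qt \<theta>) ?G) ?E psi) A = emeasure (restr_to_subalg (Q \<theta>) ?E) A" .
    qed
  qed
  show ?thesis unfolding le_cam_dist_def using d1 d2 by simp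
qed

end

context tc begin
lemma phi_Cmeas: "phi \<in> measurable Cmeas Cmeas"
proof -
  have "phi \<in> measurable Cmeas (Pi\<^sub>M {0..} (\<lambda>_. borel))"
  proof (rule measurable_PiM_single'[where f="\<lambda>i x. phi x i"])
    fix i :: real assume i: "i \<in> {0..}"
    define s where "s = i / s0"
    have s: "0 \<le> s" using i s0 by (simp add: s_def)
    have le: "tau_bar \<sigma> h i x \<le> s" for x
    proof -
      have "rho_bar \<sigma> h 0 x = 0" by (rule rho0)
      then have t0: "tau_bar \<sigma> h 0 x = 0" using tau_rho[of 0 x] by simp
      have "tau_bar \<sigma> h i x \<le> tau_bar \<sigma> h 0 x + (i - 0) / s0" using tau_upper[of 0 i x] i by simp
      then show ?thesis unfolding t0 s_def by simp
    qed
    have "(\<lambda>x. x (min (tau_bar \<sigma> h i x) s)) \<in> borel_measurable (coord_gen s)"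
      using i s by (intro phi_comp_meas) auto
    moreover have "subalgebra Cmeas (coord_gen s)" unfolding subalgebra_def using G_sub_Cmeas[of s] by simp
    ultimately have "(\<lambda>x. x (min (tau_bar \<sigma> h i x) s)) \<in> borel_measurable Cmeas"
      by (rule measurable_from_subalg[rotated])
    then show "(\<lambda>x. phi x i) \<in> borel_measurable Cmeas"
      by (rule measurable_cong[THEN iffD1, rotated]) (use le i in \<open>auto simp: phi_apply min_def\<close>)
  next
    show "(\<lambda>x i. phi x i) \<in> space Cmeas \<rightarrow> (\<Pi>\<^sub>E i\<in>{0..}. space borel)"
      by (auto simp: time_change_def split: if_split_asm)
  qed
  then have "phi \<in> measurable Cmeas (restrict_space (Pi\<^sub>M {0..} (\<lambda>_. borel)) Cspace)"
    by (rule measurable_restrict_space2[rotated]) (use phi_Cspace in auto)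
  moreover have "restrict_space (Pi\<^sub>M {0..} (\<lambda>_. borel)) Cspace = Cmeas" by (simp add: Cmeas_def)
  ultimately show ?thesis by simp
qed

end

theorem theorem2:
  fixes M :: "'w measure" and W :: "real \<Rightarrow> 'w \<Rightarrow> real" and \<eta> :: "'w \<Rightarrow> real"
    and \<sigma> :: "real \<Rightarrow> real" and \<sigma>\<^sub>0 \<sigma>\<^sub>1 K\<^sub>\<sigma> K h a T :: real and n :: nat
  assumes C_smooth: "\<forall>x. \<sigma> differentiable at x" "\<forall>x. deriv \<sigma> differentiable at x"
      "continuous_on UNIV (deriv (deriv \<sigma>))"
    and C_bounds: "0 < \<sigma>\<^sub>0\<^sup>2" "\<forall>x. \<sigma>\<^sub>0\<^sup>2 \<le> (\<sigma> x)\<^sup>2 \<and> (\<sigma> x)\<^sup>2 \<le> \<sigma>\<^sub>1\<^sup>2"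
      "\<forall>x. \<bar>deriv \<sigma> x\<bar> + \<bar>deriv (deriv \<sigma>) x\<bar> \<le> K\<^sub>\<sigma>"
    and BM: "brownian_motion M W"
    and eta: "\<eta> \<in> borel_measurable M"
      "prob_space.indep_set M
         (sigma_sets (space M) {\<eta> -` B \<inter> space M | B. B \<in> sets borel})
         (sigma_sets (space M) {(\<lambda>\<omega>. W t \<omega>) -` B \<inter> space M | t B. 0 \<le> t \<and> B \<in> sets borel})"
    and h: "h > 0" and n: "n \<ge> 1" and T: "T = real n * h" and a: "a > 0"
  shows "le_cam_dist
           (stopped_sigma (\<lambda>x. T))
           (\<lambda>b. restr_to_subalg (Q_law M W \<eta> \<sigma> h b) (stopped_sigma (\<lambda>x. T)))
           (stopped_sigma (\<lambda>y. A_bar \<sigma> h T y))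
           (\<lambda>b. restr_to_subalg (Qt_law M W \<eta> \<sigma> h b) (stopped_sigma (\<lambda>y. A_bar \<sigma> h T y)))
           (FK K) = 0
       \<and> le_cam_dist
           (stopped_sigma (\<lambda>x. tau_bar \<sigma> h a x))
           (\<lambda>b. restr_to_subalg (Q_law M W \<eta> \<sigma> h b) (stopped_sigma (\<lambda>x. tau_bar \<sigma> h a x)))
           (stopped_sigma (\<lambda>y. a))
           (\<lambda>b. restr_to_subalg (Qt_law M W \<eta> \<sigma> h b) (stopped_sigma (\<lambda>y. a)))
           (FK K) = 0"
proof -
  have BM': "prob_space M" "\<forall>\<omega>\<in>space M. W 0 \<omega> = 0 \<and> continuous_on {0..} (\<lambda>t. W t \<omega>)"
    "\<forall>s t. 0 \<le> s \<and> s < t \<longrightarrow> distributed M lborel (\<lambda>\<omega>. W t \<omega> - W s \<omega>) (normal_density 0 (sqrt (t - s)))"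
    using BM unfolding brownian_motion_def by auto
  have Wm: "(\<lambda>\<omega>. W t \<omega>) \<in> borel_measurable M" if t: "t \<ge> 0" for t
  proof (cases "t = 0")
    case True
    show ?thesis using BM'(2) True by (intro measurable_cong[THEN iffD2, OF _ borel_measurable_const[of 0]]) auto
  next
    case False
    then have "0 < t" using t by simp
    then have "distributed M lborel (\<lambda>\<omega>. W t \<omega> - W 0 \<omega>) (normal_density 0 (sqrt (t - 0)))"
      using spec[OF spec[OF BM'(3), of 0], of t] by simp
    then have m: "(\<lambda>\<omega>. W t \<omega> - W 0 \<omega>) \<in> borel_measurable M"
      using distributed_measurable by fastforce
    show ?thesis by (rule measurable_cong[THEN iffD1, OF _ m]) (use BM'(2) in auto)
  qed
  have Wc: "\<And>\<omega>. \<omega> \<in> space M \<Longrightarrow> continuous_on {0..} (\<lambda>t. W t \<omega>)" using BM'(2) by auto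
  have scont: "continuous_on UNIV \<sigma>"
    using C_smooth(1) by (intro continuous_at_imp_continuous_on) (auto intro: differentiable_imp_continuous_within)
  interpret tc \<sigma> h "\<sigma>\<^sub>0\<^sup>2" "\<sigma>\<^sub>1\<^sup>2"
    by unfold_locales (use h C_bounds scont in auto)
  have bcont: "continuous_on UNIV b" if "b \<in> FK K" for b
    using that unfolding FK_def by (intro continuous_at_imp_continuous_on) (auto intro: differentiable_imp_continuous_within)
  have fm: "(\<lambda>\<omega>. euler_path b \<sigma> h (\<eta> \<omega>) (\<lambda>t. W t \<omega>)) \<in> measurable M Cmeas" if "b \<in> FK K" for b
    by (rule euler_meas[OF bcont[OF that] scont eta(1) Wm Wc h])
  have Qp: "prob_space (Q_law M W \<eta> \<sigma> h b) \<and> sets (Q_law M W \<eta> \<sigma> h b) = sets Cmeas" if "b \<in> FK K" for b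
    unfolding Q_law_def using prob_space.prob_space_distr[OF BM'(1) fm[OF that]] by simp
  have Qt: "Qt_law M W \<eta> \<sigma> h b = distr (Q_law M W \<eta> \<sigma> h b) Cmeas phi" if "b \<in> FK K" for b
    unfolding Q_law_def Qt_law_def using distr_distr[OF phi_Cmeas fm[OF that]] by (simp add: comp_def)
  have T0: "0 \<le> T" using T h by simp
  have a0: "0 \<le> a" using a by simp
  show ?thesis
    using lecam_transfer[where \<Theta>="FK K" and Q="Q_law M W \<eta> \<sigma> h" and Qt="Qt_law M W \<eta> \<sigma> h",
        OF Qp Qt phi1[OF T0] psi1[OF T0] phi_Cmeas]
      lecam_transfer[where \<Theta>="FK K" and Q="Q_law M W \<eta> \<sigma> h" and Qt="Qt_law M W \<eta> \<sigma> h",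
        OF Qp Qt phi2[OF a0] psi2[OF a0] phi_Cmeas]
    by simp
qed

end
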